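(* There is an algorithm which takes as input a string $x\in\{0,1\}^n$ and outputs the size of $G_{x,\leq n}$ in time polynomial in $n$.
   Context: Binary strings are compared in lexicographic order with $0<1$. For $y\in\{0,1\}^n$, $\mathsf{Orbit}(y)$ is the set of all cyclic rotations of $y$. For an orbit $E$ and $x$, $E<x$ means $E$ contains a string lexicographically less than $x$; $\mathcal{C}_x$ is the set of orbits $E$ with $E<x$; and $G_{x,\leq n}=\bigcup_{E\in\mathcal{C}_x}E$, i.e., the set of $y\in\{0,1\}^n$ some cyclic rotation of which is lexicographically less than $x$. *)

theory Defs
  imports Main
begin

text \<open>Binary strings are bool lists, False = 0, True = 1 (so 0 < 1).
  Lexicographic order on strings: the library's lexord w.r.t. the strict order on bool.\<close>

definition lex_less :: "bool list \<Rightarrow> bool list \<Rightarrow> bool" where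
  "lex_less y x \<longleftrightarrow> (y, x) \<in> lexord {(a, b). a < b}"

definition Orbit :: "bool list \<Rightarrow> bool list set" where
  "Orbit y = range (\<lambda>k. rotate k y)"

definition orbit_less :: "bool list set \<Rightarrow> bool list \<Rightarrow> bool" where
  "orbit_less E x \<longleftrightarrow> (\<exists>z\<in>E. lex_less z x)"

definition C_orbits :: "bool list \<Rightarrow> bool list set set" where
  "C_orbits x = {E. (\<exists>y. length y = length x \<and> E = Orbit y) \<and> orbit_less E x}"

definition G_set :: "bool list \<Rightarrow> bool list set" where
  "G_set x = \<Union> (C_orbits x)"

text \<open>Available operations
  are constants, addition, truncated subtraction, halving and parity (no multiplication),
  so register bit-lengths grow at most linearly in the number of steps and unit cost is
  polynomially equivalent to Turing machine time.\<close>

datatype aexp = N nat | V nat | Plus aexp aexp | Minus aexp aexp | Half aexp | Par aexp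

datatype bexp = Less aexp aexp | Not bexp | And bexp bexp

datatype com = Skip | Assign nat aexp | Seq com com | If bexp com com | While bexp com

type_synonym state = "nat \<Rightarrow> nat"

fun aval :: "aexp \<Rightarrow> state \<Rightarrow> nat" where
  "aval (N c) s = c"
| "aval (V r) s = s r"
| "aval (Plus a b) s = aval a s + aval b s"
| "aval (Minus a b) s = aval a s - aval b s"
| "aval (Half a) s = aval a s div 2"
| "aval (Par a) s = aval a s mod 2"

fun bval :: "bexp \<Rightarrow> state \<Rightarrow> bool" where
  "bval (Less a b) s = (aval a s < aval b s)"
| "bval (Not b) s = (\<not> bval b s)"
| "bval (And b1 b2) s = (bval b1 s \<and> bval b2 s)"

inductive exec :: "com \<Rightarrow> state \<Rightarrow> nat \<Rightarrow> state \<Rightarrow> bool" where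
  Skip: "exec Skip s 1 s"
| Assign: "exec (Assign r a) s 1 (s(r := aval a s))"
| Seq: "exec c1 s t1 s1 \<Longrightarrow> exec c2 s1 t2 s2 \<Longrightarrow> exec (Seq c1 c2) s (t1 + t2 + 1) s2"
| IfTrue: "bval b s \<Longrightarrow> exec c1 s t s' \<Longrightarrow> exec (If b c1 c2) s (t + 1) s'"
| IfFalse: "\<not> bval b s \<Longrightarrow> exec c2 s t s' \<Longrightarrow> exec (If b c1 c2) s (t + 1) s'"
| WhileFalse: "\<not> bval b s \<Longrightarrow> exec (While b c) s 1 s"
| WhileTrue: "bval b s \<Longrightarrow> exec c s t1 s1 \<Longrightarrow> exec (While b c) s1 t2 s2 \<Longrightarrow>
    exec (While b c) s (t1 + t2 + 1) s2"

text \<open>Input encoding: the string x = x_1...x_n is given in register 0 as the number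
  with binary representation 1 x_1 ... x_n (leading 1 keeps leading zeros);
  all other registers are 0. The output is read from register 1.\<close>
definition encode :: "bool list \<Rightarrow> nat" where
  "encode x = foldl (\<lambda>a b. 2 * a + (if b then 1 else 0)) 1 x"

definition init_state :: "bool list \<Rightarrow> state" where
  "init_state x = (\<lambda>_. 0)(0 := encode x)"

end

theory Submission
  imports Defs
begin


context fixes x :: "bool list" begin

definition occ where
  "occ w i j \<longleftrightarrow> i + j < length w \<and> j < length x \<and> x!j \<and> \<not> w!(i+j) \<and> (\<forall>l<j. w!(i+l) = x!l)"
definition sm where
  "sm w k \<longleftrightarrow> k \<le> length x \<and> k \<le> length w \<and> (\<forall>l<k. w!(length w - k + l) = x!l)"
definition st where "st w = Max {k. sm w k}"
definition bad where "bad u v \<longleftrightarrow> (\<exists>i j. occ (u@v) i j \<and> length u \<le> i + j)"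
definition smeq where "smeq u u' \<longleftrightarrow> (\<forall>k. sm u k = sm u' k)"

lemma sm_fin: "finite {k. sm w k}"
  by (rule finite_subset[of _ "{..length x}"]) (auto simp: sm_def)

lemma sm0: "sm w 0" by (simp add: sm_def)

lemma sm_st: "sm w (st w)"
  unfolding st_def using sm_fin sm0 by (metis (mono_tags) Max_in empty_iff mem_Collect_eq)

lemma sm_le_st: "sm w k \<Longrightarrow> k \<le> st w"
  unfolding st_def using sm_fin by (simp add: Max_ge)

lemma st_le: "st w \<le> length x"
  using sm_st[of w] by (simp add: sm_def)

lemma sm_take: "q \<le> length x \<Longrightarrow> sm (take q x) k \<longleftrightarrow> k \<le> q \<and> (\<forall>l<k. x!(q-k+l) = x!l)"
  unfolding sm_def by (auto simp: min_def)

lemma st_take: "q \<le> length x \<Longrightarrow> st (take q x) = q"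
proof -
  assume q: "q \<le> length x"
  have "sm (take q x) q" using q by (simp add: sm_take)
  then have "q \<le> st (take q x)" by (rule sm_le_st)
  moreover have "st (take q x) \<le> q" using sm_st[of "take q x"] q by (simp add: sm_take)
  ultimately show ?thesis by simp
qed

lemma S1: "sm w k \<longleftrightarrow> sm (take (st w) x) k"
proof -
  have q: "sm w (st w)" by (rule sm_st)
  have ql: "st w \<le> length x" by (rule st_le)
  show ?thesis
  proof
    assume a: "sm w k"
    have "k \<le> st w" using a by (rule sm_le_st)
    moreover have "\<forall>l<k. x!(st w - k + l) = x!l"
    proof (intro allI impI)
      fix l assume "l < k"
      then have "st w - k + l < st w" using \<open>k \<le> st w\<close> by linarith
      then have "w!(length w - st w + (st w - k + l)) = x!(st w - k + l)" using q by (auto simp: sm_def)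
      moreover have "length w - st w + (st w - k + l) = length w - k + l"
        using \<open>k \<le> st w\<close> q by (auto simp: sm_def)
      ultimately show "x!(st w - k + l) = x!l" using a \<open>l<k\<close> by (auto simp: sm_def)
    qed
    ultimately show "sm (take (st w) x) k" using ql by (simp add: sm_take)
  next
    assume a: "sm (take (st w) x) k"
    then have k: "k \<le> st w" and h: "\<forall>l<k. x!(st w - k + l) = x!l" using ql by (auto simp: sm_take)
    have "\<forall>l<k. w!(length w - k + l) = x!l"
    proof (intro allI impI)
      fix l assume "l < k"
      then have "st w - k + l < st w" using k by linarith
      then have "w!(length w - st w + (st w - k + l)) = x!(st w - k + l)" using q by (auto simp: sm_def)
      moreover have "length w - st w + (st w - k + l) = length w - k + l"
        using k q by (auto simp: sm_def)
      ultimately show "w!(length w - k + l) = x!l" using h \<open>l<k\<close> by auto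
    qed
    then show "sm w k" using k q ql by (auto simp: sm_def)
  qed
qed

lemma smeq_st: "smeq w (take (st w) x)"
  unfolding smeq_def using S1 by blast

lemma st_cong: "smeq u u' \<Longrightarrow> st u = st u'"
  unfolding smeq_def st_def by presburger

lemma sm_append: "sm (u@v) k \<longleftrightarrow> k \<le> length x \<and>
   (if k \<le> length v then (\<forall>l<k. v!(length v - k + l) = x!l)
    else sm u (k - length v) \<and> (\<forall>l<length v. v!l = x!(k - length v + l)))"
proof (cases "k \<le> length v")
  case True
  have "\<And>l. l < k \<Longrightarrow> (u@v)!(length u + length v - k + l) = v!(length v - k + l)"
  proof -
    fix l assume "l < k"
    have "length u + length v - k + l = length u + (length v - k + l)" using True by simp
    then show "(u@v)!(length u + length v - k + l) = v!(length v - k + l)" by (simp add: nth_append)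
  qed
  then show ?thesis using True by (auto simp: sm_def)
next
  case False
  let ?k = "k - length v"
  show ?thesis
  proof
    assume a: "sm (u@v) k"
    have A: "\<forall>l<k. (u@v)!(length u + length v - k + l) = x!l" "k \<le> length u + length v" "k \<le> length x"
      using a by (auto simp: sm_def)
    have "sm u ?k"
      unfolding sm_def
    proof (intro conjI allI impI)
      show "?k \<le> length x" using A by linarith
      show "?k \<le> length u" using A by linarith
      fix l assume "l < ?k"
      then have "l < k" by linarith
      from A(1)[rule_format, OF this] have 1: "(u@v)!(length u + length v - k + l) = x!l" .
      have 2: "length u - ?k + l < length u" "length u + length v - k + l = length u - ?k + l"
        using \<open>l < ?k\<close> A False by linarith+
      from 1 have "(u@v)!(length u - ?k + l) = x!l" by (simp only: 2)
      then show "u!(length u - ?k + l) = x!l" using nth_append_left[OF 2(1)] by simp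
    qed
    moreover have "\<forall>l<length v. v!l = x!(?k + l)"
    proof (intro allI impI)
      fix l assume l: "l < length v"
      have "?k + l < k" using l False by linarith
      from A(1)[rule_format, OF this] have 1: "(u@v)!(length u + length v - k + (?k + l)) = x!(?k+l)" .
      have 2: "length u + length v - k + (?k + l) = length u + l" using A False by linarith
      from 1 have "(u@v)!(length u + l) = x!(?k+l)" by (simp only: 2)
      then show "v!l = x!(?k + l)" by (simp add: nth_append_right)
    qed
    ultimately show "k \<le> length x \<and> (if k \<le> length v then (\<forall>l<k. v!(length v - k + l) = x!l)
      else sm u ?k \<and> (\<forall>l<length v. v!l = x!(?k + l)))" using False A(3) by simp
  next
    assume a: "k \<le> length x \<and> (if k \<le> length v then (\<forall>l<k. v!(length v - k + l) = x!l)
      else sm u ?k \<and> (\<forall>l<length v. v!l = x!(?k + l)))"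
    then have B: "sm u ?k" "\<forall>l<length v. v!l = x!(?k + l)" "k \<le> length x" using False by auto
    have ku: "?k \<le> length u" "\<forall>l<?k. u!(length u - ?k + l) = x!l" using B(1) unfolding sm_def by auto
    have "\<forall>l<k. (u@v)!(length u + length v - k + l) = x!l"
    proof (intro allI impI)
      fix l assume l: "l < k"
      show "(u@v)!(length u + length v - k + l) = x!l"
      proof (cases "l < ?k")
        case True
        then have 2: "length u + length v - k + l = length u - ?k + l" "length u - ?k + l < length u"
          using ku False by linarith+
        have "(u@v)!(length u - ?k + l) = x!l" using nth_append_left[OF 2(2)] ku(2) True by simp
        then show ?thesis by (simp only: 2(1))
      next
        case c: False
        then have 2: "length u + length v - k + l = length u + (l - ?k)" "l - ?k < length v"
          using ku False l by linarith+
        have 3: "?k + (l - ?k) = l" using c by linarith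
        have "(u@v)!(length u + (l - ?k)) = x!l" using B(2) 2(2) 3 by (simp add: nth_append_right)
        then show ?thesis by (simp only: 2(1))
      qed
    qed
    moreover have "k \<le> length u + length v" using ku False by linarith
    ultimately show "sm (u@v) k" using B(3) unfolding sm_def by simp
  qed
qed

lemma smeq_append: "smeq u u' \<Longrightarrow> smeq (u@v) (u'@v)"
  unfolding smeq_def by (simp only: sm_append) simp

lemma st_suffix: "length x \<le> length v \<Longrightarrow> st (u@v) = st v"
proof -
  assume a: "length x \<le> length v"
  have "smeq (u@v) ([]@v)"
    unfolding smeq_def
  proof
    fix k
    show "sm (u@v) k = sm ([]@v) k"
      by (simp only: sm_append) (use a in auto)
  qed
  then show ?thesis using st_cong by simp
qed


lemma occ_prefix: "i + j < length w \<Longrightarrow> occ (w@z) i j \<longleftrightarrow> occ w i j"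
  unfolding occ_def by (auto simp: nth_append)

lemma occ_right: "length u \<le> i \<Longrightarrow> occ (u@v) i j \<longleftrightarrow> occ v (i - length u) j"
proof -
  assume a: "length u \<le> i"
  have 1: "\<And>l. (u@v)!(i+l) = v!(i - length u + l)"
    using a by (simp add: nth_append_right add.commute add.left_commute)
  show ?thesis unfolding occ_def 1 using a by auto
qed

lemma occ_in_v: "occ v i j \<Longrightarrow> occ (u@v) (length u + i) j"
  using occ_right[of u "length u + i" v j] by simp

lemma occ_transfer:
  assumes o: "occ (u@v) i j" and l: "length u \<le> i + j" and e: "smeq u u'"
  shows "\<exists>i'. occ (u'@v) i' j \<and> length u' \<le> i' + j"
proof (cases "length u \<le> i")
  case True
  then have "occ v (i - length u) j" using o occ_right by blast
  then show ?thesis using occ_in_v by fastforce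
next
  case False
  define k where "k = length u - i"
  have O: "i + j < length u + length v" "j < length x" "x!j" "\<not> (u@v)!(i+j)" "\<forall>l<j. (u@v)!(i+l) = x!l"
    using o by (auto simp: occ_def)
  have kj: "k \<le> j" "0 < k" using False l by (auto simp: k_def)
  have "sm u k"
    unfolding sm_def
  proof (intro conjI allI impI)
    show "k \<le> length x" using kj O by linarith
    show "k \<le> length u" by (simp add: k_def)
    fix m assume m: "m < k"
    have "length u - k + m = i + m" using False by (simp add: k_def)
    moreover have "i + m < length u" using m by (simp add: k_def)
    moreover have "(u@v)!(i+m) = x!m" using O(5) m kj by auto
    ultimately show "u!(length u - k + m) = x!m" by (simp add: nth_append_left)
  qed
  then have "sm u' k" using e by (simp add: smeq_def)
  then have K: "k \<le> length u'" "\<forall>m<k. u'!(length u' - k + m) = x!m" by (auto simp: sm_def)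
  define i' where "i' = length u' - k"
  have A: "\<And>m. m < k \<Longrightarrow> (u'@v)!(i' + m) = x!m"
    using K by (simp add: i'_def nth_append_left)
  have B: "\<And>m. k \<le> m \<Longrightarrow> (u'@v)!(i' + m) = (u@v)!(i + m)"
  proof -
    fix m assume m: "k \<le> m"
    have "i' + m = length u' + (m - k)" using K m by (simp add: i'_def)
    moreover have "i + m = length u + (m - k)" using m False by (simp add: k_def)
    ultimately show "(u'@v)!(i' + m) = (u@v)!(i + m)" by (simp add: nth_append_right)
  qed
  have "occ (u'@v) i' j"
    unfolding occ_def
  proof (intro conjI allI impI)
    show "i' + j < length (u'@v)" using O(1) K kj False by (simp add: i'_def k_def)
    show "j < length x" "x!j" by (fact O(2), fact O(3))
    show "\<not> (u'@v)!(i'+j)" using B[OF kj(1)] O(4) by simp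
    fix m assume "m < j"
    then show "(u'@v)!(i'+m) = x!m"
      using A B O(5) by (cases "m < k") auto
  qed
  moreover have "length u' \<le> i' + j" using K kj by (simp add: i'_def)
  ultimately show ?thesis by blast
qed

lemma smeq_sym: "smeq u u' \<Longrightarrow> smeq u' u" by (simp add: smeq_def)

lemma bad_cong: "smeq u u' \<Longrightarrow> bad u v = bad u' v"
  unfolding bad_def using occ_transfer smeq_sym by metis

lemma bad_snoc: "bad u (v@[c]) \<longleftrightarrow> bad u v \<or> bad (u@v) [c]"
proof
  assume "bad u (v@[c])"
  then obtain i j where o: "occ ((u@v)@[c]) i j" "length u \<le> i + j" unfolding bad_def by auto
  show "bad u v \<or> bad (u@v) [c]"
  proof (cases "i + j < length (u@v)")
    case True
    then have "occ (u@v) i j" using o occ_prefix by blast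
    then show ?thesis using o unfolding bad_def by blast
  next
    case False
    then have "bad (u@v) [c]" using o unfolding bad_def by (intro exI[of _ i] exI[of _ j]) simp
    then show ?thesis by blast
  qed
next
  assume "bad u v \<or> bad (u@v) [c]"
  then show "bad u (v@[c])"
  proof
    assume "bad u v"
    then obtain i j where o: "occ (u@v) i j" "length u \<le> i + j" unfolding bad_def by auto
    then have "i + j < length (u@v)" by (simp add: occ_def)
    then have "occ ((u@v)@[c]) i j" using o occ_prefix by blast
    then show ?thesis using o unfolding bad_def by auto
  next
    assume "bad (u@v) [c]"
    then show ?thesis unfolding bad_def by fastforce
  qed
qed

lemma bad_nil: "\<not> bad u []"
  unfolding bad_def occ_def by auto

definition hasocc where "hasocc w \<longleftrightarrow> (\<exists>i j. occ w i j)"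

lemma hasocc_bad: "hasocc v \<Longrightarrow> bad u v"
  unfolding hasocc_def bad_def using occ_in_v by fastforce

lemma hasocc_yy: "hasocc (y@y) \<longleftrightarrow> bad (take (st y) x) y"
proof -
  have "hasocc (y@y) \<longleftrightarrow> hasocc y \<or> bad y y"
  proof
    assume "hasocc (y@y)"
    then obtain i j where o: "occ (y@y) i j" unfolding hasocc_def by auto
    show "hasocc y \<or> bad y y"
    proof (cases "i + j < length y")
      case True then show ?thesis using o occ_prefix unfolding hasocc_def by blast
    next
      case False
      then have "bad y y" using o unfolding bad_def by (intro exI[of _ i] exI[of _ j]) simp
      then show ?thesis by blast
    qed
  next
    assume "hasocc y \<or> bad y y"
    then show "hasocc (y@y)"
    proof
      assume "hasocc y"
      then obtain i j where o: "occ y i j" unfolding hasocc_def by auto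
      then have "i + j < length y" by (simp add: occ_def)
      then show ?thesis using o occ_prefix unfolding hasocc_def by blast
    next
      assume "bad y y" then show ?thesis unfolding bad_def hasocc_def by auto
    qed
  qed
  moreover have "bad y y = bad (take (st y) x) y" by (rule bad_cong[OF smeq_st])
  ultimately show ?thesis using hasocc_bad by blast
qed

lemma st_snoc: "st (w@[c]) = st (take (st w) x @ [c])"
  by (rule st_cong[OF smeq_append[OF smeq_st]])

lemma bad_snoc2: "bad u (v@[c]) \<longleftrightarrow> bad u v \<or> bad (take (st (u @ v)) x) [c]"
  using bad_snoc bad_cong[OF smeq_st] by metis


definition eqx where "eqx a L \<longleftrightarrow> (\<forall>l<L. x!(a+l) = x!l)"

fun dl :: "nat \<Rightarrow> nat \<Rightarrow> nat \<Rightarrow> nat" where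
  "dl p cv 0 = 0"
| "dl p cv (Suc j) = (if eqx (p-j) j \<and> of_bool (x!j) = cv then Suc j else dl p cv j)"

fun dd :: "nat \<Rightarrow> nat \<Rightarrow> bool" where
  "dd p 0 = False"
| "dd p (Suc j) = (dd p j \<or> (eqx (p-j) j \<and> x!j))"

definition delta :: "nat \<Rightarrow> nat \<Rightarrow> nat" where "delta p cv = dl p cv (min (length x) (Suc p))"
definition deadv :: "nat \<Rightarrow> nat \<Rightarrow> bool" where "deadv p cv \<longleftrightarrow> cv = 0 \<and> dd p (min (length x) (Suc p))"

lemma dl_prop: "dl p cv K \<le> K \<and> (dl p cv K = 0 \<or> (\<exists>j. dl p cv K = Suc j \<and> j < K \<and> eqx (p-j) j \<and> of_bool (x!j) = cv))
   \<and> (\<forall>j<K. eqx (p-j) j \<and> of_bool (x!j) = cv \<longrightarrow> Suc j \<le> dl p cv K)"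
proof (induction K)
  case 0 then show ?case by simp
next
  case (Suc K)
  then show ?case
    by (auto simp: less_Suc_eq)
qed

lemma dd_iff: "dd p K \<longleftrightarrow> (\<exists>j<K. eqx (p-j) j \<and> x!j)"
  by (induction K) (auto simp: less_Suc_eq)

lemma delta_le: "delta p cv \<le> length x"
  using dl_prop[of p cv "min (length x) (Suc p)"] by (simp add: delta_def)

lemma sm_snoc_take: "p \<le> length x \<Longrightarrow> sm (take p x @ [c]) (Suc j) \<longleftrightarrow>
   j < min (length x) (Suc p) \<and> eqx (p-j) j \<and> x!j = c"
proof -
  assume p: "p \<le> length x"
  let ?v = "take p x @ [c]"
  have lv: "length ?v = Suc p" using p by simp
  show ?thesis
  proof
    assume a: "sm ?v (Suc j)"
    then have j: "j < length x" "j \<le> p" and h: "\<forall>l<Suc j. ?v!(Suc p - Suc j + l) = x!l"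
      using lv by (auto simp: sm_def)
    have "eqx (p-j) j"
      unfolding eqx_def
    proof (intro allI impI)
      fix l assume l: "l < j"
      then have "?v!(Suc p - Suc j + l) = x!l" using h by simp
      moreover have "Suc p - Suc j + l = p - j + l" "p - j + l < p" using j l by linarith+
      ultimately show "x!(p-j+l) = x!l" using p by (simp add: nth_append_left)
    qed
    moreover have "?v!(Suc p - Suc j + j) = x!j" using h by simp
    then have "c = x!j" using j p by (simp add: nth_append_right min_absorb2)
    ultimately show "j < min (length x) (Suc p) \<and> eqx (p-j) j \<and> x!j = c" using j by simp
  next
    assume a: "j < min (length x) (Suc p) \<and> eqx (p-j) j \<and> x!j = c"
    have "\<forall>l<Suc j. ?v!(Suc p - Suc j + l) = x!l"
    proof (intro allI impI)
      fix l assume l: "l < Suc j"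
      show "?v!(Suc p - Suc j + l) = x!l"
      proof (cases "l < j")
        case True
        have e: "Suc p - Suc j + l = p - j + l" and lt: "p - j + l < p" using a True by linarith+
        have "x!(p - j + l) = x!l" using a True unfolding eqx_def by blast
        then show ?thesis using lt p by (simp only: e nth_append_left length_take min_absorb2 nth_take)
      next
        case False
        then have "l = j" using l by simp
        then have "Suc p - Suc j + l = p" using a by simp
        then show ?thesis using a \<open>l = j\<close> p by (simp add: nth_append_right)
      qed
    qed
    then show "sm ?v (Suc j)" using a lv by (simp add: sm_def)
  qed
qed

lemma delta_st: "p \<le> length x \<Longrightarrow> delta p (of_bool c) = st (take p x @ [c])"
proof -
  assume p: "p \<le> length x"
  let ?v = "take p x @ [c]"
  let ?K = "min (length x) (Suc p)"
  have ofb: "\<And>b. (of_bool b = (of_bool c :: nat)) = (b = c)" by (simp add: of_bool_def)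
  have D: "delta p (of_bool c) \<le> ?K \<and> (delta p (of_bool c) = 0 \<or> (\<exists>j. delta p (of_bool c) = Suc j \<and> j < ?K \<and> eqx (p-j) j \<and> x!j = c))
   \<and> (\<forall>j<?K. eqx (p-j) j \<and> x!j = c \<longrightarrow> Suc j \<le> delta p (of_bool c))"
    using dl_prop[of p "of_bool c" ?K] unfolding delta_def ofb .
  have "Max {k. sm ?v k} = delta p (of_bool c)"
  proof (rule Max_eqI)
    show "finite {k. sm ?v k}" by (rule sm_fin)
    fix k assume "k \<in> {k. sm ?v k}"
    then have "sm ?v k" by simp
    then show "k \<le> delta p (of_bool c)"
    proof (cases k)
      case 0 then show ?thesis by simp
    next
      case (Suc j)
      then show ?thesis using \<open>sm ?v k\<close> sm_snoc_take[OF p] D by auto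
    qed
  next
    show "delta p (of_bool c) \<in> {k. sm ?v k}"
      using D sm_snoc_take[OF p] sm0 by auto
  qed
  then show ?thesis by (simp add: st_def)
qed

lemma deadv_bad: "p \<le> length x \<Longrightarrow> deadv p (of_bool c) \<longleftrightarrow> bad (take p x) [c]"
proof -
  assume p: "p \<le> length x"
  let ?v = "take p x @ [c]"
  have "bad (take p x) [c] \<longleftrightarrow> (\<exists>j. j < min (length x) (Suc p) \<and> eqx (p-j) j \<and> x!j \<and> \<not> c)"
  proof
    assume "bad (take p x) [c]"
    then obtain i j where o: "occ ?v i j" "p \<le> i + j" using p by (auto simp: bad_def)
    then have ij: "i + j = p" "j < length x" "x!j" "\<not> ?v!(i+j)" "\<forall>l<j. ?v!(i+l) = x!l"
      using p by (auto simp: occ_def)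
    have "\<not> c" using ij(1,4) p by (simp add: nth_append_right)
    moreover have "eqx (p-j) j"
      unfolding eqx_def
    proof (intro allI impI)
      fix l assume l: "l < j"
      then have "?v!(i+l) = x!l" using ij by simp
      moreover have "i + l < p" "i = p - j" using l ij by linarith+
      ultimately show "x!(p-j+l) = x!l" using p by (simp add: nth_append_left)
    qed
    ultimately show "\<exists>j. j < min (length x) (Suc p) \<and> eqx (p-j) j \<and> x!j \<and> \<not> c"
      using ij by (intro exI[of _ j]) auto
  next
    assume "\<exists>j. j < min (length x) (Suc p) \<and> eqx (p-j) j \<and> x!j \<and> \<not> c"
    then obtain j where j: "j < length x" "j \<le> p" "eqx (p-j) j" "x!j" "\<not> c" by auto
    have "occ ?v (p-j) j"
      unfolding occ_def
    proof (intro conjI allI impI)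
      show "p - j + j < length ?v" using j p by simp
      show "j < length x" "x!j" by (fact j(1), fact j(4))
      show "\<not> ?v!(p-j+j)" using j p by (simp add: nth_append_right)
      fix l assume l: "l < j"
      then have "p - j + l < p" using j by linarith
      then show "?v!(p-j+l) = x!l" using j l p by (simp add: nth_append_left eqx_def)
    qed
    then show "bad (take p x) [c]" unfolding bad_def using j p by (intro exI[of _ "p-j"] exI[of _ j]) simp
  qed
  then show ?thesis by (auto simp: deadv_def dd_iff)
qed


fun dp :: "nat \<Rightarrow> nat \<Rightarrow> nat \<Rightarrow> nat" where
  "dp q 0 p = (if p = q then 1 else 0)"
| "dp q (Suc m) p' = (\<Sum>p<Suc (length x). (if \<not> deadv p 0 \<and> delta p 0 = p' then dp q m p else 0)
      + (if \<not> deadv p 1 \<and> delta p 1 = p' then dp q m p else 0))"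

definition Lm :: "nat \<Rightarrow> bool list set" where "Lm m = {v. length v = m}"

lemma Lm_fin: "finite (Lm m)"
proof -
  have "Lm m = {xs. set xs \<subseteq> UNIV \<and> length xs = m}" by (auto simp: Lm_def)
  then show ?thesis using finite_lists_length_eq[of "UNIV :: bool set" m] by simp
qed

lemma Lm_card: "card (Lm m) = 2 ^ m"
proof -
  have "Lm m = {xs. set xs \<subseteq> UNIV \<and> length xs = m}" by (auto simp: Lm_def)
  then show ?thesis using card_lists_length_eq[of "UNIV :: bool set" m] by simp
qed

lemma sum_Lm_Suc: "sum g (Lm (Suc m)) = (\<Sum>v\<in>Lm m. g (v@[False]) + g (v@[True]))"
proof -
  have e: "Lm (Suc m) = (\<lambda>v. v@[False]) ` Lm m \<union> (\<lambda>v. v@[True]) ` Lm m"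
  proof
    show "Lm (Suc m) \<subseteq> (\<lambda>v. v@[False]) ` Lm m \<union> (\<lambda>v. v@[True]) ` Lm m"
    proof
      fix v assume "v \<in> Lm (Suc m)"
      then have l: "length v = Suc m" by (simp add: Lm_def)
      then have "v \<noteq> []" by auto
      then have v: "v = butlast v @ [last v]" by simp
      have b: "butlast v \<in> Lm m" using l by (simp add: Lm_def)
      show "v \<in> (\<lambda>v. v@[False]) ` Lm m \<union> (\<lambda>v. v@[True]) ` Lm m"
      proof (cases "last v")
        case True
        then have "v = (\<lambda>v. v@[True]) (butlast v)" using v by simp
        then have "v \<in> (\<lambda>v. v@[True]) ` Lm m" using b by (rule image_eqI)
        then show ?thesis by blast
      next
        case False
        then have "v = (\<lambda>v. v@[False]) (butlast v)" using v by simp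
        then have "v \<in> (\<lambda>v. v@[False]) ` Lm m" using b by (rule image_eqI)
        then show ?thesis by blast
      qed
    qed
  qed (auto simp: Lm_def)
  have d: "(\<lambda>v. v@[False]) ` Lm m \<inter> (\<lambda>v. v@[True]) ` Lm m = {}" by auto
  have i1: "inj_on (\<lambda>v. v@[False]) (Lm m)" by (simp add: inj_on_def)
  have i2: "inj_on (\<lambda>v. v@[True]) (Lm m)" by (simp add: inj_on_def)
  have "sum g (Lm (Suc m)) = sum g ((\<lambda>v. v@[False]) ` Lm m) + sum g ((\<lambda>v. v@[True]) ` Lm m)"
    unfolding e by (rule sum.union_disjoint) (auto simp: Lm_fin d)
  also have "\<dots> = (\<Sum>v\<in>Lm m. g (v@[False])) + (\<Sum>v\<in>Lm m. g (v@[True]))"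
    using sum.reindex[OF i1, of g] sum.reindex[OF i2, of g] by (simp add: comp_def)
  finally show ?thesis by (simp add: sum.distrib)
qed

definition cntS where
  "cntS q m p = (\<Sum>v\<in>Lm m. if st (take q x @ v) = p \<and> \<not> bad (take q x) v then 1 else (0::nat))"

lemma ind_split: "(w::nat) \<le> length x \<Longrightarrow>
   (if P w then (1::nat) else 0) = (\<Sum>a<Suc (length x). if w = a \<and> P a then 1 else 0)"
proof -
  assume "w \<le> length x"
  have "(\<Sum>a<Suc (length x). if w = a \<and> P a then (1::nat) else 0) = (\<Sum>a<Suc (length x). if w = a then (if P a then 1 else 0) else 0)"
    by (rule sum.cong) auto
  also have "\<dots> = (if w \<in> {..<Suc (length x)} then (if P w then 1 else 0) else 0)" by (rule sum.delta') simp
  also have "\<dots> = (if P w then 1 else 0)" using \<open>w \<le> length x\<close> by simp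
  finally show ?thesis by (rule sym)
qed

lemma dp_cnt: "q \<le> length x \<Longrightarrow> dp q m p = cntS q m p"
proof (induction m arbitrary: p)
  case 0
  have "Lm 0 = {[]}" by (auto simp: Lm_def)
  then show ?case using 0 by (simp add: cntS_def st_take bad_nil)
next
  case (Suc m)
  let ?F = "\<lambda>v. st (take q x @ v)"
  let ?B = "\<lambda>v. bad (take q x) v"
  let ?h = "\<lambda>a cv. if \<not> deadv a cv \<and> delta a cv = p then (1::nat) else 0"
  have step: "\<And>v c. (if ?F (v@[c]) = p \<and> \<not> ?B (v@[c]) then (1::nat) else 0)
     = (\<Sum>a<Suc (length x). if ?F v = a \<and> \<not> ?B v then ?h a (of_bool c) else 0)"
  proof -
    fix v c
    have le: "?F v \<le> length x" by (rule st_le)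
    have "?F (v@[c]) = st (take (?F v) x @ [c])" using st_snoc[of "take q x @ v" c] by simp
    also have "\<dots> = delta (?F v) (of_bool c)" using delta_st[OF le] by simp
    finally have 1: "?F (v@[c]) = delta (?F v) (of_bool c)" .
    have 2: "?B (v@[c]) \<longleftrightarrow> ?B v \<or> deadv (?F v) (of_bool c)"
      using bad_snoc2[of "take q x" v c] deadv_bad[OF le] by simp
    have "(if ?F (v@[c]) = p \<and> \<not> ?B (v@[c]) then (1::nat) else 0)
       = (if (\<lambda>a. \<not> ?B v \<and> \<not> deadv a (of_bool c) \<and> delta a (of_bool c) = p) (?F v) then 1 else 0)"
      using 1 2 by auto
    also have "\<dots> = (\<Sum>a<Suc (length x). if ?F v = a \<and> (\<not> ?B v \<and> \<not> deadv a (of_bool c) \<and> delta a (of_bool c) = p) then 1 else 0)"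
      by (rule ind_split[OF le])
    also have "\<dots> = (\<Sum>a<Suc (length x). if ?F v = a \<and> \<not> ?B v then ?h a (of_bool c) else 0)"
      by (rule sum.cong) auto
    finally show "(if ?F (v@[c]) = p \<and> \<not> ?B (v@[c]) then (1::nat) else 0)
     = (\<Sum>a<Suc (length x). if ?F v = a \<and> \<not> ?B v then ?h a (of_bool c) else 0)" .
  qed
  define G where "G v a cv = (if ?F v = a \<and> \<not> ?B v then ?h a cv else 0)" for v a cv
  define I where "I v a = (if ?F v = a \<and> \<not> ?B v then 1 else (0::nat))" for v a
  have GI: "G v a cv = I v a * ?h a cv" for v a cv by (simp add: G_def I_def)
  have "cntS q (Suc m) p = (\<Sum>v\<in>Lm m. (if ?F (v@[False]) = p \<and> \<not> ?B (v@[False]) then (1::nat) else 0)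
       + (if ?F (v@[True]) = p \<and> \<not> ?B (v@[True]) then (1::nat) else 0))"
    by (simp only: cntS_def sum_Lm_Suc append_assoc)
  also have "\<dots> = (\<Sum>v\<in>Lm m. (\<Sum>a<Suc (length x). G v a 0) + (\<Sum>a<Suc (length x). G v a 1))"
    by (rule sum.cong[OF refl]) (simp only: step G_def of_bool_eq)
  also have "\<dots> = (\<Sum>v\<in>Lm m. \<Sum>a<Suc (length x). G v a 0 + G v a 1)"
    by (simp only: sum.distrib)
  also have "\<dots> = (\<Sum>a<Suc (length x). \<Sum>v\<in>Lm m. G v a 0 + G v a 1)"
    by (rule sum.swap)
  also have "\<dots> = (\<Sum>a<Suc (length x). (\<Sum>v\<in>Lm m. I v a) * ?h a 0 + (\<Sum>v\<in>Lm m. I v a) * ?h a 1)"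
    by (simp only: GI sum.distrib sum_distrib_right)
  also have "\<dots> = (\<Sum>a<Suc (length x). dp q m a * ?h a 0 + dp q m a * ?h a 1)"
    using Suc by (simp add: cntS_def I_def)
  also have "\<dots> = dp q (Suc m) p" by (simp only: dp.simps) (rule sum.cong[OF refl], simp)
  finally show ?case by (rule sym)
qed


lemma yy_nth: "i < 2 * length y \<Longrightarrow> (y@y)!i = y!(i mod length y)"
proof (cases "i < length y")
  case True then show ?thesis by (simp add: nth_append_left)
next
  case False
  assume i: "i < 2 * length y"
  then have "i mod length y = i - length y" using False
    by (metis add_diff_inverse_nat le_add_diff_inverse2 mod_add_self2 mod_less mult_2 nat_add_left_cancel_less not_less)
  then show ?thesis using False by (simp add: nth_append_right)
qed

lemma take_eq_nth: "j \<le> length z \<Longrightarrow> j \<le> length w \<Longrightarrow> (take j z = take j w) \<longleftrightarrow> (\<forall>l<j. z!l = w!l)"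
  by (simp add: list_eq_iff_nth_eq min_absorb2)

lemma lex_less_iff: "length z = length x \<Longrightarrow> lex_less z x \<longleftrightarrow> (\<exists>j<length x. (\<forall>l<j. z!l = x!l) \<and> \<not> z!j \<and> x!j)"
  unfolding lex_less_def lexord_take_index_conv
  by (auto simp: take_eq_nth less_bool_def)

lemma rot_occ: "length y = length x \<Longrightarrow> (\<exists>k. lex_less (rotate k y) x) \<longleftrightarrow> hasocc (y@y)"
proof
  assume L: "length y = length x"
  assume "\<exists>k. lex_less (rotate k y) x"
  then obtain k where "lex_less (rotate k y) x" by auto
  then obtain j where j: "j < length x" "\<forall>l<j. (rotate k y)!l = x!l" "\<not> (rotate k y)!j" "x!j"
    using L lex_less_iff[of "rotate k y"] by auto
  let ?n = "length y"
  have np: "0 < ?n" using j(1) L by linarith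
  define i where "i = k mod ?n"
  have i: "i < ?n" using np by (simp add: i_def)
  have R: "\<And>l. l < ?n \<Longrightarrow> (rotate k y)!l = (y@y)!(i + l)"
  proof -
    fix l assume l: "l < ?n"
    have "(rotate k y)!l = y!((k + l) mod ?n)" using l by (simp add: nth_rotate)
    also have "(k + l) mod ?n = (i + l) mod ?n" by (simp add: i_def mod_add_left_eq)
    also have "y!((i + l) mod ?n) = (y@y)!(i+l)" using i l by (simp add: yy_nth)
    finally show "(rotate k y)!l = (y@y)!(i + l)" .
  qed
  have "occ (y@y) i j"
    unfolding occ_def using i j L R by auto
  then show "hasocc (y@y)" by (auto simp: hasocc_def)
next
  assume L: "length y = length x"
  assume "hasocc (y@y)"
  then obtain i j where o: "occ (y@y) i j" by (auto simp: hasocc_def)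
  let ?n = "length y"
  have O: "i + j < 2 * ?n" "j < ?n" "x!j" "\<not> (y@y)!(i+j)" "\<forall>l<j. (y@y)!(i+l) = x!l"
    using o L by (auto simp: occ_def)
  have R: "\<And>l. l \<le> j \<Longrightarrow> (rotate i y)!l = (y@y)!(i + l)"
  proof -
    fix l assume l: "l \<le> j"
    then have "(rotate i y)!l = y!((i + l) mod ?n)" using O by (simp add: nth_rotate)
    also have "\<dots> = (y@y)!(i+l)" using O l by (simp add: yy_nth)
    finally show "(rotate i y)!l = (y@y)!(i + l)" .
  qed
  have "lex_less (rotate i y) x"
    using L O R by (subst lex_less_iff) (auto intro!: exI[of _ j])
  then show "\<exists>k. lex_less (rotate k y) x" by blast
qed

lemma rotate_back: "rotate m z = rotate (m + k * (length z - 1)) (rotate k z)"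
proof (cases "length z = 0")
  case True then show ?thesis by simp
next
  case False
  have "rotate (m + k * (length z - 1)) (rotate k z) = rotate (m + k * (length z - 1) + k) z"
    by (simp add: rotate_rotate)
  also have "m + k * (length z - 1) + k = m + k * length z"
  proof -
    obtain L where L: "length z = Suc L" using False by (cases "length z") auto
    show ?thesis unfolding L by (simp add: algebra_simps)
  qed
  also have "rotate (m + k * length z) z = rotate m z"
  proof -
    have "rotate (m + k * length z) z = rotate ((m + k * length z) mod length z) z" by (rule rotate_conv_mod)
    also have "(m + k * length z) mod length z = m mod length z" by simp
    also have "rotate (m mod length z) z = rotate m z" by (rule rotate_conv_mod[symmetric])
    finally show ?thesis .
  qed
  finally show ?thesis by simp
qed

lemma orbit_mem: "y \<in> Orbit z \<Longrightarrow> Orbit y = Orbit z \<and> length y = length z"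
proof -
  assume "y \<in> Orbit z"
  then obtain k where y: "y = rotate k z" by (auto simp: Orbit_def)
  have "Orbit y \<subseteq> Orbit z" unfolding Orbit_def y by (auto simp: rotate_rotate)
  moreover have "Orbit z \<subseteq> Orbit y" unfolding Orbit_def y using rotate_back by blast
  ultimately show ?thesis using y by auto
qed

lemma G_char: "G_set x = {y. length y = length x \<and> (\<exists>k. lex_less (rotate k y) x)}"
proof
  show "G_set x \<subseteq> {y. length y = length x \<and> (\<exists>k. lex_less (rotate k y) x)}"
  proof
    fix y assume "y \<in> G_set x"
    then obtain E where E: "E \<in> C_orbits x" "y \<in> E" by (auto simp: G_set_def)
    then obtain z where z: "length z = length x" "E = Orbit z" "\<exists>w\<in>E. lex_less w x"
      by (auto simp: C_orbits_def orbit_less_def)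
    then have o: "Orbit y = Orbit z" "length y = length z" using orbit_mem E by auto
    from z(3) obtain w where w: "w \<in> E" "lex_less w x" by blast
    then have "w \<in> Orbit y" using o z(2) by simp
    then obtain k where "w = rotate k y" by (auto simp: Orbit_def)
    then show "y \<in> {y. length y = length x \<and> (\<exists>k. lex_less (rotate k y) x)}"
      using z o w by auto
  qed
next
  show "{y. length y = length x \<and> (\<exists>k. lex_less (rotate k y) x)} \<subseteq> G_set x"
  proof
    fix y assume "y \<in> {y. length y = length x \<and> (\<exists>k. lex_less (rotate k y) x)}"
    then have y: "length y = length x" "\<exists>k. lex_less (rotate k y) x" by auto
    have "Orbit y \<in> C_orbits x" using y by (auto simp: C_orbits_def orbit_less_def Orbit_def)
    moreover have "y \<in> Orbit y" unfolding Orbit_def by (metis rangeI rotate0 id_apply)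
    ultimately show "y \<in> G_set x" by (auto simp: G_set_def)
  qed
qed

lemma card_G: "card (G_set x) = 2 ^ length x - (\<Sum>q<Suc (length x). dp q (length x) q)"
proof -
  let ?n = "length x"
  define S where "S = {y \<in> Lm ?n. \<not> hasocc (y@y)}"
  have G: "G_set x = Lm ?n - S" unfolding G_char S_def Lm_def using rot_occ by auto
  have SL: "S \<subseteq> Lm ?n" by (auto simp: S_def)
  have fS: "finite S" using SL Lm_fin finite_subset by blast
  have "card (G_set x) = 2 ^ ?n - card S" unfolding G using card_Diff_subset[OF fS SL] Lm_card by simp
  moreover have "card S = (\<Sum>q<Suc ?n. dp q ?n q)"
  proof -
    have "card S = (\<Sum>y\<in>Lm ?n. if \<not> hasocc (y@y) then 1 else (0::nat))"
      unfolding S_def card_eq_sum[of "{y \<in> Lm ?n. \<not> hasocc (y@y)}"] by (rule sum.inter_filter[OF Lm_fin])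
    also have "\<dots> = (\<Sum>y\<in>Lm ?n. \<Sum>q<Suc ?n. if st (take q x @ y) = q \<and> \<not> bad (take q x) y then 1 else (0::nat))"
    proof (rule sum.cong[OF refl])
      fix y assume "y \<in> Lm ?n"
      then have ly: "length y = ?n" by (simp add: Lm_def)
      have e: "\<And>q. st (take q x @ y) = st y" using st_suffix ly by simp
      have "(if \<not> hasocc (y@y) then 1 else (0::nat)) = (if \<not> bad (take (st y) x) y then 1 else 0)"
        by (simp add: hasocc_yy)
      also have "\<dots> = (\<Sum>a<Suc ?n. if st y = a \<and> \<not> bad (take a x) y then 1 else 0)"
        by (rule ind_split[OF st_le])
      finally show "(if \<not> hasocc (y@y) then 1 else (0::nat)) = (\<Sum>q<Suc ?n. if st (take q x @ y) = q \<and> \<not> bad (take q x) y then 1 else 0)"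
        unfolding e .
    qed
    also have "\<dots> = (\<Sum>q<Suc ?n. cntS q ?n q)" unfolding cntS_def by (rule sum.swap)
    also have "\<dots> = (\<Sum>q<Suc ?n. dp q ?n q)" by (rule sum.cong[OF refl]) (simp add: dp_cnt)
    finally show ?thesis .
  qed
  ultimately show ?thesis by (simp only:)
qed

end


definition runs :: "com \<Rightarrow> state \<Rightarrow> nat \<Rightarrow> state \<Rightarrow> bool" where
  "runs c s T s' \<longleftrightarrow> (\<exists>t. exec c s t s' \<and> t \<le> T)"

lemma R_asg: "runs (Assign r a) s 1 (s(r := aval a s))"
  unfolding runs_def using exec.Assign by blast

lemma R_skip: "runs Skip s 1 s"
  unfolding runs_def using exec.Skip by blast

lemma R_seq: "runs c1 s T1 s1 \<Longrightarrow> runs c2 s1 T2 s2 \<Longrightarrow> runs (Seq c1 c2) s (T1 + T2 + 1) s2"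
  unfolding runs_def using exec.Seq by (meson add_le_mono le_refl)

lemma R_if: "runs c1 s T1 s1 \<Longrightarrow> runs c2 s T2 s2 \<Longrightarrow>
   runs (If b c1 c2) s (max T1 T2 + 1) (if bval b s then s1 else s2)"
  unfolding runs_def
proof -
  assume a: "\<exists>t. exec c1 s t s1 \<and> t \<le> T1" "\<exists>t. exec c2 s t s2 \<and> t \<le> T2"
  show "\<exists>t. exec (If b c1 c2) s t (if bval b s then s1 else s2) \<and> t \<le> max T1 T2 + 1"
  proof (cases "bval b s")
    case True
    then show ?thesis using a(1) exec.IfTrue by fastforce
  next
    case False
    then show ?thesis using a(2) exec.IfFalse by fastforce
  qed
qed

lemma R_mono: "runs c s T s' \<Longrightarrow> T \<le> T' \<Longrightarrow> runs c s T' s'"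
  unfolding runs_def by (meson order_trans)

lemma R_eq: "runs c s T s1 \<Longrightarrow> s1 = s2 \<Longrightarrow> runs c s T s2"
  by simp

lemma R_while_aux:
  assumes b: "\<And>j. j < K \<Longrightarrow> bval b (f j)" and nb: "\<not> bval b (f K)"
    and c: "\<And>j. j < K \<Longrightarrow> runs c (f j) T (f (Suc j))"
  shows "i \<le> K \<Longrightarrow> runs (While b c) (f i) ((K - i) * (T + 2) + 1) (f K)"
proof (induction "K - i" arbitrary: i)
  case 0
  then have "i = K" by simp
  then show ?case using nb exec.WhileFalse unfolding runs_def by fastforce
next
  case (Suc d)
  then have i: "i < K" "K - Suc i = d" by auto
  then have IH: "runs (While b c) (f (Suc i)) (d * (T + 2) + 1) (f K)" using Suc.hyps(1)[of "Suc i"] by simp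
  obtain t1 where t1: "exec c (f i) t1 (f (Suc i))" "t1 \<le> T" using c[OF i(1)] unfolding runs_def by auto
  obtain t2 where t2: "exec (While b c) (f (Suc i)) t2 (f K)" "t2 \<le> d * (T + 2) + 1" using IH unfolding runs_def by auto
  have "exec (While b c) (f i) (t1 + t2 + 1) (f K)" using b[OF i(1)] t1(1) t2(1) exec.WhileTrue by blast
  moreover have "t1 + t2 + 1 \<le> (K - i) * (T + 2) + 1"
  proof -
    have "K - i = Suc d" using Suc(2) by simp
    then show ?thesis using t1(2) t2(2) by simp
  qed
  ultimately show ?case unfolding runs_def by blast
qed

lemma R_while:
  assumes "\<And>j. j < K \<Longrightarrow> bval b (f j)" and "\<not> bval b (f K)"
    and "\<And>j. j < K \<Longrightarrow> runs c (f j) T (f (Suc j))"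
  shows "runs (While b c) (f 0) (K * (T + 2) + 1) (f K)"
  using R_while_aux[OF assms, of 0] by simp

abbreviation Sq (infixr ";;" 30) where "Sq c1 c2 \<equiv> Seq c1 c2"
abbreviation As (infix "::=" 40) where "As r a \<equiv> Assign r a"

lemma encode_snoc: "encode (v @ [b]) = 2 * encode v + of_bool b"
  by (simp add: encode_def)

lemma encode_Nil: "encode [] = 1" by (simp add: encode_def)

lemma encode_ge1: "1 \<le> encode v"
  by (induction v rule: rev_induct) (auto simp: encode_snoc encode_Nil)

lemma encode_gt1: "1 < encode v \<longleftrightarrow> v \<noteq> []"
proof (cases v rule: rev_cases)
  case Nil then show ?thesis by (simp add: encode_Nil)
next
  case (snoc ys y) then show ?thesis using encode_ge1[of ys] by (simp add: encode_snoc)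
qed

lemma encode_div: "i \<le> length x \<Longrightarrow> encode x div 2 ^ i = encode (take (length x - i) x)"
proof (induction i)
  case 0 then show ?case by simp
next
  case (Suc i)
  let ?k = "length x - Suc i"
  have k: "?k < length x" "length x - i = Suc ?k" using Suc by auto
  have "encode x div 2 ^ Suc i = encode x div 2 ^ i div 2" by (simp only: power_Suc2 div_mult2_eq)
  also have "\<dots> = encode (take (Suc ?k) x) div 2" using Suc k by simp
  also have "take (Suc ?k) x = take ?k x @ [x ! ?k]" using k by (simp add: take_Suc_conv_app_nth)
  also have "encode (take ?k x @ [x ! ?k]) div 2 = encode (take ?k x)" by (simp add: encode_snoc)
  finally show ?case .
qed

lemma encode_bit: "j < length x \<Longrightarrow> encode x div 2 ^ (length x - Suc j) mod 2 = of_bool (x ! j)"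
proof -
  assume j: "j < length x"
  then have "encode x div 2 ^ (length x - Suc j) = encode (take (Suc j) x)" by (simp add: encode_div)
  also have "take (Suc j) x = take j x @ [x ! j]" using j by (simp add: take_Suc_conv_app_nth)
  finally show ?thesis by (simp add: encode_snoc)
qed

lemma encode_bit2: "j < length x \<Longrightarrow> (x ! j \<longrightarrow> encode x div 2 ^ (length x - Suc j) mod 2 = Suc 0)
   \<and> (\<not> x ! j \<longrightarrow> encode x div 2 ^ (length x - Suc j) mod 2 = 0)"
  using encode_bit[of j x] by simp

definition env :: "bool list \<Rightarrow> state \<Rightarrow> bool" where
  "env x s \<longleftrightarrow> s 0 = encode x \<and> s 2 = length x"

definition BITLOOP where
  "BITLOOP = While (Less (N 0) (V 20)) (19 ::= Half (V 19) ;; 20 ::= Minus (V 20) (N 1))"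

lemma bitloop: "runs BITLOOP s ((s 20) * 5 + 1) (s(19 := s 19 div 2 ^ s 20, 20 := 0))"
proof -
  define K where "K = s 20"
  define f where "f i = s(19 := s 19 div 2 ^ i, 20 := K - i)" for i
  have "runs BITLOOP (f 0) (K * (3 + 2) + 1) (f K)"
    unfolding BITLOOP_def
  proof (rule R_while)
    fix j assume "j < K"
    then show "bval (Less (N 0) (V 20)) (f j)" by (simp add: f_def)
  next
    show "\<not> bval (Less (N 0) (V 20)) (f K)" by (simp add: f_def)
  next
    fix j assume "j < K"
    show "runs (19 ::= Half (V 19) ;; 20 ::= Minus (V 20) (N 1)) (f j) 3 (f (Suc j))"
      apply (rule R_mono, rule R_eq, rule R_seq, rule R_asg, rule R_asg)
        apply (simp add: f_def fun_eq_iff power_Suc2 div_mult2_eq)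
        apply (metis div_mult2_eq mult.commute)
       apply simp
      done
  qed
  moreover have "f 0 = s" by (simp add: f_def K_def fun_eq_iff)
  moreover have "f K = s(19 := s 19 div 2 ^ s 20, 20 := 0)" by (simp add: f_def K_def)
  ultimately show ?thesis by (simp add: K_def)
qed

definition BIT where
  "BIT = (19 ::= V 0 ;; 20 ::= Minus (Minus (V 2) (N 1)) (V 21) ;; BITLOOP ;; 18 ::= Par (V 19) ;; 19 ::= N 0 ;; 20 ::= N 0)"

lemma bit: "env x s \<Longrightarrow> s 21 < length x \<Longrightarrow>
   runs BIT s (5 * length x + 20) (s(18 := of_bool (x ! s 21), 19 := 0, 20 := 0))"
  unfolding BIT_def
  apply (rule R_mono, rule R_eq)
    apply (rule R_seq, rule R_asg)+
    apply (rule R_seq, rule bitloop)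
    apply (rule R_seq, rule R_asg)+
    apply (rule R_asg)
   apply (simp add: fun_eq_iff env_def)
   apply (simp add: encode_bit2)
  apply (simp add: env_def)
  done


definition tBIT :: "nat \<Rightarrow> nat" where "tBIT n = 5 * n + 20"

lemma bit': "env x s \<Longrightarrow> s 21 < length x \<Longrightarrow>
   runs BIT s (tBIT (length x)) (s(18 := of_bool (x ! s 21), 19 := 0, 20 := 0))"
  unfolding tBIT_def by (rule bit)


definition EQXBODY where
  "EQXBODY = (21 ::= Plus (V 22) (V 16) ;; BIT ;; 17 ::= V 18 ;; 21 ::= V 16 ;; BIT ;;
    If (And (Not (Less (V 17) (V 18))) (Not (Less (V 18) (V 17)))) Skip (15 ::= N 0) ;;
    17 ::= N 0 ;; 18 ::= N 0 ;; 21 ::= N 0 ;; 16 ::= Plus (V 16) (N 1))"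

lemma eqx_Suc: "eqx x a (Suc j) \<longleftrightarrow> eqx x a j \<and> x!(a+j) = x!j"
  by (auto simp: eqx_def less_Suc_eq)

lemma eqx_body: "env x s \<Longrightarrow> s 22 + s 23 \<le> length x \<Longrightarrow> j < s 23 \<Longrightarrow>
  s 17 = 0 \<Longrightarrow> s 18 = 0 \<Longrightarrow> s 19 = 0 \<Longrightarrow> s 20 = 0 \<Longrightarrow> s 21 = 0 \<Longrightarrow>
  runs EQXBODY (s(15 := of_bool (eqx x (s 22) j), 16 := j)) (2 * tBIT (length x) + 40)
     (s(15 := of_bool (eqx x (s 22) (Suc j)), 16 := Suc j))"
  unfolding EQXBODY_def
  apply (rule R_mono, rule R_eq)
    apply (rule R_seq, rule R_asg)
    apply (rule R_seq, rule bit', simp add: env_def, simp)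
    apply (rule R_seq, rule R_asg)
    apply (rule R_seq, rule R_asg)
    apply (rule R_seq, rule bit', simp add: env_def, simp)
    apply (rule R_seq, rule R_if, rule R_skip, rule R_asg)
    apply (rule R_seq, rule R_asg)+
    apply (rule R_asg)
   apply (simp add: fun_eq_iff eqx_Suc, blast)
  apply simp
  done


lemma eqx_loop: "env x s \<Longrightarrow> s 22 + s 23 \<le> length x \<Longrightarrow> s 15 = 1 \<Longrightarrow> s 16 = 0 \<Longrightarrow>
  s 17 = 0 \<Longrightarrow> s 18 = 0 \<Longrightarrow> s 19 = 0 \<Longrightarrow> s 20 = 0 \<Longrightarrow> s 21 = 0 \<Longrightarrow>
  runs (While (Less (V 16) (V 23)) EQXBODY) s (s 23 * (2 * tBIT (length x) + 40 + 2) + 1)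
     (s(15 := of_bool (eqx x (s 22) (s 23)), 16 := s 23))"
proof -
  assume a: "env x s" "s 22 + s 23 \<le> length x" "s 15 = 1" "s 16 = 0"
    "s 17 = 0" "s 18 = 0" "s 19 = 0" "s 20 = 0" "s 21 = 0"
  define f where "f j = s(15 := of_bool (eqx x (s 22) j), 16 := j)" for j
  have "runs (While (Less (V 16) (V 23)) EQXBODY) (f 0) (s 23 * (2 * tBIT (length x) + 40 + 2) + 1) (f (s 23))"
  proof (rule R_while)
    fix j assume "j < s 23"
    then show "bval (Less (V 16) (V 23)) (f j)" by (simp add: f_def)
  next
    show "\<not> bval (Less (V 16) (V 23)) (f (s 23))" by (simp add: f_def)
  next
    fix j assume "j < s 23"
    then show "runs EQXBODY (f j) (2 * tBIT (length x) + 40) (f (Suc j))"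
      unfolding f_def using eqx_body a by blast
  qed
  moreover have "f 0 = s" using a by (simp add: f_def fun_eq_iff eqx_def)
  ultimately show ?thesis by (simp add: f_def)
qed

definition EQX where
  "EQX = (16 ::= N 0 ;; 17 ::= N 0 ;; 18 ::= N 0 ;; 19 ::= N 0 ;; 20 ::= N 0 ;; 21 ::= N 0 ;; 15 ::= N 1 ;;
     While (Less (V 16) (V 23)) EQXBODY ;; 16 ::= N 0)"

definition tEQX :: "nat \<Rightarrow> nat" where "tEQX n = n * (2 * tBIT n + 42) + 20"

lemma eqx_spec: "env x s \<Longrightarrow> s 22 + s 23 \<le> length x \<Longrightarrow>
  runs EQX s (tEQX (length x)) (s(15 := of_bool (eqx x (s 22) (s 23)), 16 := 0, 17 := 0, 18 := 0, 19 := 0, 20 := 0, 21 := 0))"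
proof -
  assume a: "env x s" "s 22 + s 23 \<le> length x"
  have m: "s 23 * (2 * tBIT (length x) + 42) \<le> length x * (2 * tBIT (length x) + 42)"
    using a(2) by (intro mult_le_mono1) simp
  show ?thesis
  unfolding EQX_def
  apply (rule R_mono, rule R_eq)
    apply (rule R_seq, rule R_asg)+
    apply (rule R_seq, rule eqx_loop)
  using a apply (simp_all add: env_def)[9]
    apply (rule R_asg)
   apply (simp add: fun_eq_iff)
  apply (simp add: tEQX_def)
  apply (rule le_trans[OF mult_le_mono1[of "s 23" "length x"]])
  using a apply (simp_all add: algebra_simps)
  done
qed


definition DLBODY where
  "DLBODY = (22 ::= Minus (V 9) (V 14) ;; 23 ::= V 14 ;; EQX ;; 21 ::= V 14 ;; BIT ;;
    If (And (Less (N 0) (V 15)) (And (Not (Less (V 18) (V 11))) (Not (Less (V 11) (V 18))))) (12 ::= Plus (V 14) (N 1)) Skip ;;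
    15 ::= N 0 ;; 18 ::= N 0 ;; 21 ::= N 0 ;; 22 ::= N 0 ;; 23 ::= N 0 ;; 14 ::= Plus (V 14) (N 1))"

definition DDBODY where
  "DDBODY = (22 ::= Minus (V 9) (V 14) ;; 23 ::= V 14 ;; EQX ;; 21 ::= V 14 ;; BIT ;;
    If (And (Less (N 0) (V 15)) (Less (N 0) (V 18))) (13 ::= N 1) Skip ;;
    15 ::= N 0 ;; 18 ::= N 0 ;; 21 ::= N 0 ;; 22 ::= N 0 ;; 23 ::= N 0 ;; 14 ::= Plus (V 14) (N 1))"

abbreviation "tmpz s \<equiv> (s 15 = 0 \<and> s 16 = 0 \<and> s 17 = 0 \<and> s 18 = 0 \<and> s 19 = 0 \<and> s 20 = 0 \<and> s 21 = 0 \<and> s 22 = 0 \<and> s 23 = 0)"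

lemma dl_body: "env x s \<Longrightarrow> s 9 \<le> length x \<Longrightarrow> j < min (length x) (Suc (s 9)) \<Longrightarrow> tmpz s \<Longrightarrow>
  runs DLBODY (s(12 := dl x (s 9) (s 11) j, 14 := j)) (tEQX (length x) + tBIT (length x) + 30)
     (s(12 := dl x (s 9) (s 11) (Suc j), 14 := Suc j))"
  unfolding DLBODY_def
  apply (rule R_mono, rule R_eq)
    apply (rule R_seq, rule R_asg)+
    apply (rule R_seq, rule eqx_spec, simp add: env_def, simp)
    apply (rule R_seq, rule R_asg)
    apply (rule R_seq, rule bit', simp add: env_def, simp)
    apply (rule R_seq, rule R_if, rule R_asg, rule R_skip)
    apply (rule R_seq, rule R_asg)+
    apply (rule R_asg)
   apply (auto simp: fun_eq_iff)[1]
  apply simp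
  done

lemma dd_body: "env x s \<Longrightarrow> s 9 \<le> length x \<Longrightarrow> j < min (length x) (Suc (s 9)) \<Longrightarrow> tmpz s \<Longrightarrow>
  runs DDBODY (s(13 := of_bool (dd x (s 9) j), 14 := j)) (tEQX (length x) + tBIT (length x) + 30)
     (s(13 := of_bool (dd x (s 9) (Suc j)), 14 := Suc j))"
  unfolding DDBODY_def
  apply (rule R_mono, rule R_eq)
    apply (rule R_seq, rule R_asg)+
    apply (rule R_seq, rule eqx_spec, simp add: env_def, simp)
    apply (rule R_seq, rule R_asg)
    apply (rule R_seq, rule bit', simp add: env_def, simp)
    apply (rule R_seq, rule R_if, rule R_asg, rule R_skip)
    apply (rule R_seq, rule R_asg)+
    apply (rule R_asg)
   apply (simp add: fun_eq_iff)
  apply simp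
  done


definition DLLOOP where "DLLOOP = While (And (Less (V 14) (V 2)) (Less (V 14) (Plus (V 9) (N 1)))) DLBODY"
definition DDLOOP where "DDLOOP = While (And (Less (V 14) (V 2)) (Less (V 14) (Plus (V 9) (N 1)))) DDBODY"

lemma dl_loop: "env x s \<Longrightarrow> s 9 \<le> length x \<Longrightarrow> tmpz s \<Longrightarrow> s 12 = 0 \<Longrightarrow> s 14 = 0 \<Longrightarrow>
  runs DLLOOP s (min (length x) (Suc (s 9)) * (tEQX (length x) + tBIT (length x) + 30 + 2) + 1)
    (s(12 := dl x (s 9) (s 11) (min (length x) (Suc (s 9))), 14 := min (length x) (Suc (s 9))))"
proof -
  assume a: "env x s" "s 9 \<le> length x" "tmpz s" "s 12 = 0" "s 14 = 0"
  define K where "K = min (length x) (Suc (s 9))"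
  define f where "f j = s(12 := dl x (s 9) (s 11) j, 14 := j)" for j
  have "runs DLLOOP (f 0) (K * (tEQX (length x) + tBIT (length x) + 30 + 2) + 1) (f K)"
    unfolding DLLOOP_def
  proof (rule R_while)
    fix j assume "j < K"
    then show "bval (And (Less (V 14) (V 2)) (Less (V 14) (Plus (V 9) (N 1)))) (f j)"
      using a by (simp add: f_def K_def env_def)
  next
    show "\<not> bval (And (Less (V 14) (V 2)) (Less (V 14) (Plus (V 9) (N 1)))) (f K)"
      using a by (auto simp add: f_def K_def env_def)
  next
    fix j assume "j < K"
    then show "runs DLBODY (f j) (tEQX (length x) + tBIT (length x) + 30) (f (Suc j))"
      unfolding f_def K_def using dl_body a by blast
  qed
  moreover have "f 0 = s" using a by (simp add: f_def fun_eq_iff)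
  ultimately show ?thesis by (simp add: f_def K_def)
qed

lemma dd_loop: "env x s \<Longrightarrow> s 9 \<le> length x \<Longrightarrow> tmpz s \<Longrightarrow> s 13 = 0 \<Longrightarrow> s 14 = 0 \<Longrightarrow>
  runs DDLOOP s (min (length x) (Suc (s 9)) * (tEQX (length x) + tBIT (length x) + 30 + 2) + 1)
    (s(13 := of_bool (dd x (s 9) (min (length x) (Suc (s 9)))), 14 := min (length x) (Suc (s 9))))"
proof -
  assume a: "env x s" "s 9 \<le> length x" "tmpz s" "s 13 = 0" "s 14 = 0"
  define K where "K = min (length x) (Suc (s 9))"
  define f where "f j = s(13 := of_bool (dd x (s 9) j), 14 := j)" for j
  have "runs DDLOOP (f 0) (K * (tEQX (length x) + tBIT (length x) + 30 + 2) + 1) (f K)"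
    unfolding DDLOOP_def
  proof (rule R_while)
    fix j assume "j < K"
    then show "bval (And (Less (V 14) (V 2)) (Less (V 14) (Plus (V 9) (N 1)))) (f j)"
      using a by (simp add: f_def K_def env_def)
  next
    show "\<not> bval (And (Less (V 14) (V 2)) (Less (V 14) (Plus (V 9) (N 1)))) (f K)"
      using a by (auto simp add: f_def K_def env_def)
  next
    fix j assume "j < K"
    then show "runs DDBODY (f j) (tEQX (length x) + tBIT (length x) + 30) (f (Suc j))"
      unfolding f_def K_def using dd_body a by blast
  qed
  moreover have "f 0 = s" using a by (simp add: f_def fun_eq_iff)
  ultimately show ?thesis by (simp add: f_def K_def)
qed

definition tDL :: "nat \<Rightarrow> nat" where "tDL n = n * (tEQX n + tBIT n + 32) + 40"

definition DELTA where
  "DELTA = (14 ::= N 0 ;; 15 ::= N 0 ;; 16 ::= N 0 ;; 17 ::= N 0 ;; 18 ::= N 0 ;; 19 ::= N 0 ;;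
    20 ::= N 0 ;; 21 ::= N 0 ;; 22 ::= N 0 ;; 23 ::= N 0 ;; 12 ::= N 0 ;; DLLOOP ;; 14 ::= N 0)"

definition DEAD where
  "DEAD = (14 ::= N 0 ;; 15 ::= N 0 ;; 16 ::= N 0 ;; 17 ::= N 0 ;; 18 ::= N 0 ;; 19 ::= N 0 ;;
    20 ::= N 0 ;; 21 ::= N 0 ;; 22 ::= N 0 ;; 23 ::= N 0 ;; 13 ::= N 0 ;; If (Less (N 0) (V 11)) Skip DDLOOP ;; 14 ::= N 0)"

lemma min_mult_le: "min (n::nat) k * A \<le> n * A"
  by (simp add: mult_le_mono1)

lemma delta_spec: "env x s \<Longrightarrow> s 9 \<le> length x \<Longrightarrow>
  runs DELTA s (tDL (length x)) (s(12 := delta x (s 9) (s 11), 14 := 0, 15 := 0, 16 := 0, 17 := 0, 18 := 0,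
     19 := 0, 20 := 0, 21 := 0, 22 := 0, 23 := 0))"
proof -
  assume a: "env x s" "s 9 \<le> length x"
  show ?thesis
  unfolding DELTA_def
  apply (rule R_mono, rule R_eq)
    apply (rule R_seq, rule R_asg)+
    apply (rule R_seq, rule dl_loop)
  using a apply (simp_all add: env_def)[5]
    apply (rule R_asg)
   apply (simp add: fun_eq_iff delta_def)
  apply (simp add: tDL_def)
  apply (rule le_trans[OF min_mult_le[of "length x"]])
  apply (simp add: algebra_simps)
  done
qed

lemma dead_spec: "env x s \<Longrightarrow> s 9 \<le> length x \<Longrightarrow>
  runs DEAD s (tDL (length x)) (s(13 := of_bool (deadv x (s 9) (s 11)), 14 := 0, 15 := 0, 16 := 0, 17 := 0, 18 := 0,
     19 := 0, 20 := 0, 21 := 0, 22 := 0, 23 := 0))"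
proof -
  assume a: "env x s" "s 9 \<le> length x"
  show ?thesis
  unfolding DEAD_def
  apply (rule R_mono, rule R_eq)
    apply (rule R_seq, rule R_asg)+
    apply (rule R_seq, rule R_if, rule R_skip, rule dd_loop)
  using a apply (simp_all add: env_def)[5]
    apply (rule R_asg)
   apply (auto simp add: fun_eq_iff deadv_def)[1]
  apply (simp add: tDL_def)
  apply (rule le_trans[OF min_mult_le[of "length x"]])
  apply (simp add: algebra_simps)
  done
qed


lemma div2_comm: "(a::nat) div 2 ^ j div 2 = a div 2 div 2 ^ j"
  by (metis div_mult2_eq mult.commute)

definition SHLW where
  "SHLW = (25 ::= N 0 ;; While (Less (V 25) (V 3)) (24 ::= Plus (V 24) (V 24) ;; 25 ::= Plus (V 25) (N 1)) ;; 25 ::= N 0)"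
definition SHRW where
  "SHRW = (25 ::= N 0 ;; While (Less (V 25) (V 3)) (24 ::= Half (V 24) ;; 25 ::= Plus (V 25) (N 1)) ;; 25 ::= N 0)"

lemma shlw: "runs SHLW s (s 3 * 5 + 10) (s(24 := s 24 * 2 ^ s 3, 25 := 0))"
proof -
  define f where "f j = s(24 := s 24 * 2 ^ j, 25 := j)" for j
  have L: "runs (While (Less (V 25) (V 3)) (24 ::= Plus (V 24) (V 24) ;; 25 ::= Plus (V 25) (N 1))) (f 0) (s 3 * (3 + 2) + 1) (f (s 3))"
  proof (rule R_while)
    fix j assume "j < s 3"
    then show "bval (Less (V 25) (V 3)) (f j)" by (simp add: f_def)
  next
    show "\<not> bval (Less (V 25) (V 3)) (f (s 3))" by (simp add: f_def)
  next
    fix j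
    show "runs (24 ::= Plus (V 24) (V 24) ;; 25 ::= Plus (V 25) (N 1)) (f j) 3 (f (Suc j))"
      apply (rule R_mono, rule R_eq, rule R_seq, rule R_asg, rule R_asg)
       apply (simp add: f_def fun_eq_iff)
      apply simp
      done
  qed
  have f0: "f 0 = s(25 := 0)" by (simp add: f_def fun_eq_iff)
  show ?thesis
    unfolding SHLW_def
    apply (rule R_mono, rule R_eq)
      apply (rule R_seq, rule R_asg)
      apply (rule R_seq)
       apply (simp only: aval.simps f0[symmetric], rule L)
      apply (rule R_asg)
     apply (simp add: f_def fun_eq_iff)
    apply simp
    done
qed

lemma shrw: "runs SHRW s (s 3 * 5 + 10) (s(24 := s 24 div 2 ^ s 3, 25 := 0))"
proof -
  define f where "f j = s(24 := s 24 div 2 ^ j, 25 := j)" for j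
  have L: "runs (While (Less (V 25) (V 3)) (24 ::= Half (V 24) ;; 25 ::= Plus (V 25) (N 1))) (f 0) (s 3 * (3 + 2) + 1) (f (s 3))"
  proof (rule R_while)
    fix j assume "j < s 3"
    then show "bval (Less (V 25) (V 3)) (f j)" by (simp add: f_def)
  next
    show "\<not> bval (Less (V 25) (V 3)) (f (s 3))" by (simp add: f_def)
  next
    fix j
    show "runs (24 ::= Half (V 24) ;; 25 ::= Plus (V 25) (N 1)) (f j) 3 (f (Suc j))"
      apply (rule R_mono, rule R_eq, rule R_seq, rule R_asg, rule R_asg)
       apply (simp add: f_def fun_eq_iff power_Suc2 div_mult2_eq div2_comm)
      apply simp
      done
  qed
  have f0: "f 0 = s(25 := 0)" by (simp add: f_def fun_eq_iff)
  show ?thesis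
    unfolding SHRW_def
    apply (rule R_mono, rule R_eq)
      apply (rule R_seq, rule R_asg)
      apply (rule R_seq)
       apply (simp only: aval.simps f0[symmetric], rule L)
      apply (rule R_asg)
     apply (simp add: f_def fun_eq_iff)
    apply simp
    done
qed


lemma div_comm2: "(a::nat) div b div c = a div c div b"
  by (metis div_mult2_eq mult.commute)

definition SHLK where
  "SHLK = (27 ::= N 0 ;; 25 ::= N 0 ;; While (Less (V 27) (V 28)) (SHLW ;; 27 ::= Plus (V 27) (N 1)) ;; 27 ::= N 0)"
definition SHRK where
  "SHRK = (27 ::= N 0 ;; 25 ::= N 0 ;; While (Less (V 27) (V 28)) (SHRW ;; 27 ::= Plus (V 27) (N 1)) ;; 27 ::= N 0)"

lemma shlk: "runs SHLK s (s 28 * (s 3 * 5 + 14) + 10) (s(24 := s 24 * 2 ^ (s 3 * s 28), 25 := 0, 27 := 0))"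
proof -
  define f where "f j = s(24 := s 24 * 2 ^ (s 3 * j), 25 := 0, 27 := j)" for j
  have L: "runs (While (Less (V 27) (V 28)) (SHLW ;; 27 ::= Plus (V 27) (N 1))) (f 0) (s 28 * ((s 3 * 5 + 10 + 1 + 1) + 2) + 1) (f (s 28))"
  proof (rule R_while)
    fix j assume "j < s 28"
    then show "bval (Less (V 27) (V 28)) (f j)" by (simp add: f_def)
  next
    show "\<not> bval (Less (V 27) (V 28)) (f (s 28))" by (simp add: f_def)
  next
    fix j
    show "runs (SHLW ;; 27 ::= Plus (V 27) (N 1)) (f j) (s 3 * 5 + 10 + 1 + 1) (f (Suc j))"
      apply (rule R_mono, rule R_eq, rule R_seq, rule shlw, rule R_asg)
       apply (simp add: f_def fun_eq_iff power_add)
      apply (simp add: f_def)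
      done
  qed
  have f0: "f 0 = s(27 := 0, 25 := 0)" by (simp add: f_def fun_eq_iff)
  show ?thesis
    unfolding SHLK_def
    apply (rule R_mono, rule R_eq)
      apply (rule R_seq, rule R_asg)
      apply (rule R_seq, rule R_asg)
      apply (rule R_seq)
       apply (simp only: aval.simps f0[symmetric], rule L)
      apply (rule R_asg)
     apply (simp add: f_def fun_eq_iff)
    apply (simp add: algebra_simps)
    done
qed

lemma shrk: "runs SHRK s (s 28 * (s 3 * 5 + 14) + 10) (s(24 := s 24 div 2 ^ (s 3 * s 28), 25 := 0, 27 := 0))"
proof -
  define f where "f j = s(24 := s 24 div 2 ^ (s 3 * j), 25 := 0, 27 := j)" for j
  have L: "runs (While (Less (V 27) (V 28)) (SHRW ;; 27 ::= Plus (V 27) (N 1))) (f 0) (s 28 * ((s 3 * 5 + 10 + 1 + 1) + 2) + 1) (f (s 28))"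
  proof (rule R_while)
    fix j assume "j < s 28"
    then show "bval (Less (V 27) (V 28)) (f j)" by (simp add: f_def)
  next
    show "\<not> bval (Less (V 27) (V 28)) (f (s 28))" by (simp add: f_def)
  next
    fix j
    show "runs (SHRW ;; 27 ::= Plus (V 27) (N 1)) (f j) (s 3 * 5 + 10 + 1 + 1) (f (Suc j))"
      apply (rule R_mono, rule R_eq, rule R_seq, rule shrw, rule R_asg)
       apply (simp add: f_def fun_eq_iff power_add div_mult2_eq)
       apply (metis div_mult2_eq mult.commute)
      apply (simp add: f_def)
      done
  qed
  have f0: "f 0 = s(27 := 0, 25 := 0)" by (simp add: f_def fun_eq_iff)
  show ?thesis
    unfolding SHRK_def
    apply (rule R_mono, rule R_eq)
      apply (rule R_seq, rule R_asg)
      apply (rule R_seq, rule R_asg)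
      apply (rule R_seq)
       apply (simp only: aval.simps f0[symmetric], rule L)
      apply (rule R_asg)
     apply (simp add: f_def fun_eq_iff)
    apply (simp add: algebra_simps)
    done
qed

definition STEPC where
  "STEPC = (DELTA ;; DEAD ;; If (Less (N 0) (V 13)) Skip (24 ::= V 10 ;; 28 ::= V 12 ;; SHLK ;; 8 ::= Plus (V 8) (V 24)) ;;
     12 ::= N 0 ;; 13 ::= N 0 ;; 24 ::= N 0 ;; 28 ::= N 0)"

definition tSTEP :: "nat \<Rightarrow> nat" where "tSTEP n = 2 * tDL n + n * (5 * n + 19) + 40"

definition envW :: "bool list \<Rightarrow> state \<Rightarrow> bool" where
  "envW x s \<longleftrightarrow> env x s \<and> s 3 = Suc (length x)"

abbreviation "tz s \<equiv> (\<forall>r\<in>{12,13,14,15,16,17,18,19,20,21,22,23,24,25,27,28}. s r = (0::nat))"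

lemma stepc: "envW x s \<Longrightarrow> s 9 \<le> length x \<Longrightarrow> tz s \<Longrightarrow>
  runs STEPC s (tSTEP (length x))
   (s(8 := s 8 + (if deadv x (s 9) (s 11) then 0 else s 10 * 2 ^ (Suc (length x) * delta x (s 9) (s 11)))))"
proof -
  assume a: "envW x s" "s 9 \<le> length x" "tz s"
  have d: "delta x (s 9) (s 11) * (Suc (length x) * 5 + 14) \<le> length x * (Suc (length x) * 5 + 14)"
    using delta_le by (intro mult_le_mono1) auto
  show ?thesis
  unfolding STEPC_def
  apply (rule R_mono, rule R_eq)
    apply (rule R_seq, rule delta_spec)
  using a apply (simp_all add: env_def envW_def)[2]
    apply (rule R_seq, rule dead_spec)
  using a apply (simp_all add: env_def envW_def)[2]
    apply (rule R_seq, rule R_if, rule R_skip)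
     apply (rule R_seq, rule R_asg)+
     apply (rule R_seq, rule shlk, rule R_asg)
    apply (rule R_seq, rule R_asg)+
    apply (rule R_asg)
  using a apply (simp add: fun_eq_iff envW_def)
  using a d apply (simp add: envW_def tSTEP_def algebra_simps)
  done
qed


definition pk :: "nat \<Rightarrow> (nat \<Rightarrow> nat) \<Rightarrow> nat \<Rightarrow> nat" where
  "pk W a K = (\<Sum>i<K. a i * 2 ^ (W * i))"

lemma pk_Suc_shift: "pk W a (Suc K) = a 0 + 2 ^ W * pk W (\<lambda>i. a (Suc i)) K"
  unfolding pk_def sum.lessThan_Suc_shift
  by (simp add: sum_distrib_left power_add algebra_simps)

lemma pk_div: "a 0 < 2 ^ W \<Longrightarrow> pk W a (Suc K) div 2 ^ W = pk W (\<lambda>i. a (Suc i)) K"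
  unfolding pk_Suc_shift by simp

lemma pk_mod: "a 0 < 2 ^ W \<Longrightarrow> pk W a (Suc K) mod 2 ^ W = a 0"
  unfolding pk_Suc_shift by simp

lemma R_asgE: "v = aval a s \<Longrightarrow> runs (Assign r a) s 1 (s(r := v))"
  using R_asg by simp

lemma pk_0: "pk W a 0 = 0" by (simp add: pk_def)

definition PBODY where
  "PBODY = (24 ::= V 6 ;; SHRW ;; 26 ::= V 24 ;; SHLW ;; 10 ::= Minus (V 6) (V 24) ;; 6 ::= V 26 ;;
     24 ::= N 0 ;; 26 ::= N 0 ;; 11 ::= N 0 ;; STEPC ;; 11 ::= N 1 ;; STEPC ;; 10 ::= N 0 ;; 11 ::= N 0 ;;
     9 ::= Plus (V 9) (N 1))"

definition contrib :: "bool list \<Rightarrow> (nat \<Rightarrow> nat) \<Rightarrow> nat \<Rightarrow> nat" where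
  "contrib x a p = (if deadv x p 0 then 0 else a p * 2 ^ (Suc (length x) * delta x p 0))
      + (if deadv x p 1 then 0 else a p * 2 ^ (Suc (length x) * delta x p 1))"

definition tPB :: "nat \<Rightarrow> nat" where "tPB n = 2 * tSTEP n + 10 * n + 60"

lemma pbody: "envW x s \<Longrightarrow> tz s \<Longrightarrow> s 10 = 0 \<Longrightarrow> s 11 = 0 \<Longrightarrow> s 26 = 0 \<Longrightarrow>
  (\<And>i. a i < 2 ^ Suc (length x)) \<Longrightarrow> p \<le> length x \<Longrightarrow>
  runs PBODY (s(6 := pk (Suc (length x)) (\<lambda>i. a (p + i)) (Suc (length x) - p), 8 := ac, 9 := p)) (tPB (length x))
    (s(6 := pk (Suc (length x)) (\<lambda>i. a (Suc p + i)) (Suc (length x) - Suc p), 8 := ac + contrib x a p, 9 := Suc p))"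
proof -
  assume a: "envW x s" "tz s" "s 10 = 0" "s 11 = 0" "s 26 = 0" "\<And>i. a i < 2 ^ Suc (length x)" "p \<le> length x"
  let ?W = "Suc (length x)"
  let ?V = "pk ?W (\<lambda>i. a (p + i)) (Suc (length x) - p)"
  have e: "Suc (length x) - p = Suc (length x - p)" "Suc (length x) - Suc p = length x - p" using a(7) by auto
  have vd: "?V div 2 ^ ?W = pk ?W (\<lambda>i. a (Suc p + i)) (Suc (length x) - Suc p)"
    unfolding e using pk_div[of "\<lambda>i. a (p + i)" ?W "length x - p", OF a(6)[of "p+0"]] by simp
  have vm: "?V - ?V div 2 ^ ?W * 2 ^ ?W = a p"
    unfolding minus_div_mult_eq_mod unfolding e using pk_mod[of "\<lambda>i. a (p + i)" ?W "length x - p", OF a(6)[of "p+0"]] by simp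
  have vm2: "?V - pk ?W (\<lambda>i. a (Suc p + i)) (Suc (length x) - Suc p) * 2 ^ ?W = a p"
    using vm vd by simp
  have s3: "s 3 = ?W" using a(1) by (simp add: envW_def)
  show ?thesis
  unfolding PBODY_def
  apply (rule R_mono, rule R_eq)
    apply (rule R_seq, rule R_asgE, simp)
    apply (rule R_seq, rule R_eq, rule shrw, simp)
    apply (rule R_seq, rule R_asgE, simp)
    apply (rule R_seq, rule R_eq, rule shlw, simp)
    apply (rule R_seq, rule R_asgE, simp)+
    apply (rule R_seq, rule R_eq, rule stepc)
  using a apply (simp_all add: envW_def env_def)[3]
     apply simp
    apply (rule R_seq, rule R_asgE, simp)
    apply (rule R_seq, rule R_eq, rule stepc)
  using a apply (simp_all add: envW_def env_def)[3]
     apply simp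
    apply (rule R_seq, rule R_asgE, simp)+
    apply (rule R_asgE, simp)
  using a apply (simp add: fun_eq_iff s3 vd[simplified] vm2[simplified] contrib_def)
  using a apply (simp add: s3 tPB_def)
  done
qed


definition PLOOP where "PLOOP = While (Less (V 9) (Plus (V 2) (N 1))) PBODY"

lemma ploop: "envW x s \<Longrightarrow> tz s \<Longrightarrow> s 10 = 0 \<Longrightarrow> s 11 = 0 \<Longrightarrow> s 26 = 0 \<Longrightarrow>
  (\<And>i. a i < 2 ^ Suc (length x)) \<Longrightarrow> s 9 = 0 \<Longrightarrow> s 8 = 0 \<Longrightarrow> s 6 = pk (Suc (length x)) a (Suc (length x)) \<Longrightarrow>
  runs PLOOP s (Suc (length x) * (tPB (length x) + 2) + 1)
    (s(6 := 0, 8 := (\<Sum>p<Suc (length x). contrib x a p), 9 := Suc (length x)))"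
proof -
  assume a: "envW x s" "tz s" "s 10 = 0" "s 11 = 0" "s 26 = 0" "\<And>i. a i < 2 ^ Suc (length x)"
    "s 9 = 0" "s 8 = 0" "s 6 = pk (Suc (length x)) a (Suc (length x))"
  define f where "f p = s(6 := pk (Suc (length x)) (\<lambda>i. a (p + i)) (Suc (length x) - p),
     8 := (\<Sum>p'<p. contrib x a p'), 9 := p)" for p
  have "runs PLOOP (f 0) (Suc (length x) * (tPB (length x) + 2) + 1) (f (Suc (length x)))"
    unfolding PLOOP_def
  proof (rule R_while)
    fix j assume "j < Suc (length x)"
    then show "bval (Less (V 9) (Plus (V 2) (N 1))) (f j)" using a(1) by (simp add: f_def envW_def env_def)
  next
    show "\<not> bval (Less (V 9) (Plus (V 2) (N 1))) (f (Suc (length x)))" using a(1) by (simp add: f_def envW_def env_def)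
  next
    fix j assume j: "j < Suc (length x)"
    have "runs PBODY (s(6 := pk (Suc (length x)) (\<lambda>i. a (j + i)) (Suc (length x) - j), 8 := (\<Sum>p'<j. contrib x a p'), 9 := j))
      (tPB (length x)) (s(6 := pk (Suc (length x)) (\<lambda>i. a (Suc j + i)) (Suc (length x) - Suc j),
          8 := (\<Sum>p'<j. contrib x a p') + contrib x a j, 9 := Suc j))"
      by (rule pbody) (use a j in auto)
    then show "runs PBODY (f j) (tPB (length x)) (f (Suc j))" by (simp add: f_def)
  qed
  moreover have "f 0 = s" using a by (simp add: f_def fun_eq_iff)
  moreover have "f (Suc (length x)) = s(6 := 0, 8 := (\<Sum>p<Suc (length x). contrib x a p), 9 := Suc (length x))"
    by (simp add: f_def pk_0)
  ultimately show ?thesis by simp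
qed

lemma sum_delta_pow: "(d::nat) < K \<Longrightarrow> (A::nat) = A \<Longrightarrow>
  (\<Sum>p'<K. (if \<not> D \<and> d = p' then A else 0) * 2 ^ (W * p')) = (if D then 0 else A * 2 ^ (W * d))"
proof -
  assume d: "d < K" and "A = A"
  have "(\<Sum>p'<K. (if \<not> D \<and> d = p' then A else 0) * 2 ^ (W * p')) = (\<Sum>p'<K. if d = p' then (if D then 0 else A * 2 ^ (W * p')) else 0)"
    by (rule sum.cong) auto
  also have "\<dots> = (if d \<in> {..<K} then (if D then 0 else A * 2 ^ (W * d)) else 0)" by (rule sum.delta') simp
  also have "\<dots> = (if D then 0 else A * 2 ^ (W * d))" using d by simp
  finally show ?thesis .
qed

lemma contrib_sum: "(\<Sum>p<Suc (length x). contrib x a p) =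
  pk (Suc (length x)) (\<lambda>p'. \<Sum>p<Suc (length x). (if \<not> deadv x p 0 \<and> delta x p 0 = p' then a p else 0)
      + (if \<not> deadv x p 1 \<and> delta x p 1 = p' then a p else 0)) (Suc (length x))"
proof -
  let ?K = "Suc (length x)"
  let ?W = "Suc (length x)"
  have dl: "\<And>p cv. delta x p cv < ?K" using delta_le by (simp add: le_imp_less_Suc)
  have "pk ?W (\<lambda>p'. \<Sum>p<?K. (if \<not> deadv x p 0 \<and> delta x p 0 = p' then a p else 0)
      + (if \<not> deadv x p 1 \<and> delta x p 1 = p' then a p else 0)) ?K
    = (\<Sum>p'<?K. \<Sum>p<?K. (if \<not> deadv x p 0 \<and> delta x p 0 = p' then a p else 0) * 2 ^ (?W * p')
      + (if \<not> deadv x p 1 \<and> delta x p 1 = p' then a p else 0) * 2 ^ (?W * p'))"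
    unfolding pk_def by (simp only: sum_distrib_right distrib_right)
  also have "\<dots> = (\<Sum>p<?K. \<Sum>p'<?K. (if \<not> deadv x p 0 \<and> delta x p 0 = p' then a p else 0) * 2 ^ (?W * p')
      + (if \<not> deadv x p 1 \<and> delta x p 1 = p' then a p else 0) * 2 ^ (?W * p'))"
    by (rule sum.swap)
  also have "\<dots> = (\<Sum>p<?K. contrib x a p)"
    by (rule sum.cong[OF refl]) (simp only: sum.distrib sum_delta_pow[OF dl refl] contrib_def)
  finally show ?thesis by (rule sym)
qed

lemma dp_step: "(\<lambda>p'. \<Sum>p<Suc (length x). (if \<not> deadv x p 0 \<and> delta x p 0 = p' then dp x q m p else 0)
      + (if \<not> deadv x p 1 \<and> delta x p 1 = p' then dp x q m p else 0)) = dp x q (Suc m)"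
  by (rule ext) simp


lemma dp_le: "q \<le> length x \<Longrightarrow> dp x q m p \<le> 2 ^ m"
proof -
  assume q: "q \<le> length x"
  have "dp x q m p = cntS x q m p" using dp_cnt[OF q] by simp
  also have "\<dots> \<le> (\<Sum>v\<in>Lm m. 1)" unfolding cntS_def by (rule sum_mono) simp
  also have "\<dots> = 2 ^ m" using Lm_card[of m] by simp
  finally show ?thesis .
qed

lemma dp_lt: "q \<le> length x \<Longrightarrow> m \<le> length x \<Longrightarrow> dp x q m p < 2 ^ Suc (length x)"
proof -
  assume "q \<le> length x" "m \<le> length x"
  then have "dp x q m p \<le> 2 ^ m" using dp_le by auto
  moreover have "(2::nat) ^ m \<le> 2 ^ length x" by (rule power_increasing) (use \<open>m \<le> length x\<close> in auto)
  moreover have "(0::nat) < 2 ^ length x" by simp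
  ultimately show ?thesis by (simp only: power_Suc)
qed

definition MBODY where
  "MBODY = (8 ::= N 0 ;; 9 ::= N 0 ;; PLOOP ;; 6 ::= V 8 ;; 8 ::= N 0 ;; 9 ::= N 0 ;; 7 ::= Plus (V 7) (N 1))"

definition tMB :: "nat \<Rightarrow> nat" where "tMB n = Suc n * (tPB n + 2) + 20"

lemma mbody: "envW x s \<Longrightarrow> tz s \<Longrightarrow> s 10 = 0 \<Longrightarrow> s 11 = 0 \<Longrightarrow> s 26 = 0 \<Longrightarrow> s 8 = 0 \<Longrightarrow> s 9 = 0 \<Longrightarrow>
  q \<le> length x \<Longrightarrow> m < length x \<Longrightarrow>
  runs MBODY (s(6 := pk (Suc (length x)) (dp x q m) (Suc (length x)), 7 := m)) (tMB (length x))
    (s(6 := pk (Suc (length x)) (dp x q (Suc m)) (Suc (length x)), 7 := Suc m))"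
proof -
  assume a: "envW x s" "tz s" "s 10 = 0" "s 11 = 0" "s 26 = 0" "s 8 = 0" "s 9 = 0" "q \<le> length x" "m < length x"
  have b: "\<And>i. dp x q m i < 2 ^ Suc (length x)" using dp_lt a by simp
  have cs: "(\<Sum>p<Suc (length x). contrib x (dp x q m) p) = pk (Suc (length x)) (dp x q (Suc m)) (Suc (length x))"
    unfolding contrib_sum dp_step ..
  show ?thesis
  unfolding MBODY_def
  apply (rule R_mono, rule R_eq)
    apply (rule R_seq, rule R_asgE, simp)+
    apply (rule R_seq, rule R_eq, rule ploop[where a = "dp x q m"])
  using a b apply (simp_all add: envW_def env_def)[9]
     apply simp
    apply (rule R_seq, rule R_asgE, simp)+
    apply (rule R_asgE, simp)
  using a apply (simp add: fun_eq_iff cs[simplified])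
  apply (simp add: tMB_def)
  done
qed

definition MLOOP where "MLOOP = While (Less (V 7) (V 2)) MBODY"

lemma mloop: "envW x s \<Longrightarrow> tz s \<Longrightarrow> s 10 = 0 \<Longrightarrow> s 11 = 0 \<Longrightarrow> s 26 = 0 \<Longrightarrow> s 8 = 0 \<Longrightarrow> s 9 = 0 \<Longrightarrow>
  q \<le> length x \<Longrightarrow> s 7 = 0 \<Longrightarrow> s 6 = pk (Suc (length x)) (dp x q 0) (Suc (length x)) \<Longrightarrow>
  runs MLOOP s (length x * (tMB (length x) + 2) + 1)
    (s(6 := pk (Suc (length x)) (dp x q (length x)) (Suc (length x)), 7 := length x))"
proof -
  assume a: "envW x s" "tz s" "s 10 = 0" "s 11 = 0" "s 26 = 0" "s 8 = 0" "s 9 = 0" "q \<le> length x"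
    "s 7 = 0" "s 6 = pk (Suc (length x)) (dp x q 0) (Suc (length x))"
  define f where "f m = s(6 := pk (Suc (length x)) (dp x q m) (Suc (length x)), 7 := m)" for m
  have "runs MLOOP (f 0) (length x * (tMB (length x) + 2) + 1) (f (length x))"
    unfolding MLOOP_def
  proof (rule R_while)
    fix j assume "j < length x"
    then show "bval (Less (V 7) (V 2)) (f j)" using a(1) by (simp add: f_def envW_def env_def)
  next
    show "\<not> bval (Less (V 7) (V 2)) (f (length x))" using a(1) by (simp add: f_def envW_def env_def)
  next
    fix j assume j: "j < length x"
    show "runs MBODY (f j) (tMB (length x)) (f (Suc j))"
      unfolding f_def by (rule mbody) (use a j in auto)
  qed
  moreover have "f 0 = s" using a by (simp add: f_def fun_eq_iff)
  ultimately show ?thesis by (simp add: f_def)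
qed


lemma pk_shift: "j \<le> K \<Longrightarrow> (\<And>i. a i < 2 ^ W) \<Longrightarrow> pk W a K div 2 ^ (W * j) = pk W (\<lambda>i. a (j + i)) (K - j)"
proof (induction j)
  case 0 then show ?case by simp
next
  case (Suc j)
  then have e: "K - j = Suc (K - Suc j)" by simp
  have "(2::nat) ^ (W * Suc j) = 2 ^ (W * j) * 2 ^ W" by (simp add: power_add)
  then have "pk W a K div 2 ^ (W * Suc j) = pk W a K div 2 ^ (W * j) div 2 ^ W"
    by (simp only: div_mult2_eq)
  also have "\<dots> = pk W (\<lambda>i. a (j + i)) (K - j) div 2 ^ W" using Suc by simp
  also have "\<dots> = pk W (\<lambda>i. a (j + Suc i)) (K - Suc j)"
    unfolding e using pk_div[of "\<lambda>i. a (j + i)" W "K - Suc j"] Suc(3)[of "j + 0"] by simp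
  finally show ?case by simp
qed

lemma pk_extract: "q < K \<Longrightarrow> (\<And>i. a i < 2 ^ W) \<Longrightarrow>
  pk W a K div 2 ^ (W * q) - pk W a K div 2 ^ (W * q) div 2 ^ W * 2 ^ W = a q"
proof -
  assume q: "q < K" and b: "\<And>i. a i < 2 ^ W"
  have e: "K - q = Suc (K - Suc q)" using q by simp
  have "pk W a K div 2 ^ (W * q) = pk W (\<lambda>i. a (q + i)) (Suc (K - Suc q))"
    using pk_shift[of q K a W] q b e by simp
  then show ?thesis unfolding minus_div_mult_eq_mod using pk_mod[of "\<lambda>i. a (q + i)" W] b[of "q + 0"] by simp
qed

lemma pk_dp0: "q \<le> length x \<Longrightarrow> pk W (dp x q 0) (Suc (length x)) = 2 ^ (W * q)"
proof -
  assume q: "q \<le> length x"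
  have "pk W (dp x q 0) (Suc (length x)) = (\<Sum>i<Suc (length x). if q = i then 2 ^ (W * i) else 0)"
    unfolding pk_def by (rule sum.cong) auto
  also have "\<dots> = 2 ^ (W * q)" using q by (subst sum.delta') auto
  finally show ?thesis .
qed

lemma pk_dp0': "q \<le> length x \<Longrightarrow> 2 ^ (q + length x * q) = pk (Suc (length x)) (dp x q 0) (Suc (length x))"
  using pk_dp0[of q x "Suc (length x)"] by simp

definition QBODY where
  "QBODY = (24 ::= N 1 ;; 28 ::= V 5 ;; SHLK ;; 6 ::= V 24 ;; 24 ::= N 0 ;; 28 ::= N 0 ;; 7 ::= N 0 ;; MLOOP ;;
   24 ::= V 6 ;; 28 ::= V 5 ;; SHRK ;; 26 ::= V 24 ;; SHRW ;; SHLW ;; 4 ::= Plus (V 4) (Minus (V 26) (V 24)) ;;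
   6 ::= N 0 ;; 7 ::= N 0 ;; 24 ::= N 0 ;; 26 ::= N 0 ;; 28 ::= N 0 ;; 5 ::= Plus (V 5) (N 1))"

definition tQB :: "nat \<Rightarrow> nat" where
  "tQB n = n * (tMB n + 2) + 2 * (n * (5 * n + 19)) + 10 * n + 100"

lemma qbody: "envW x s \<Longrightarrow> tz s \<Longrightarrow> s 6 = 0 \<Longrightarrow> s 7 = 0 \<Longrightarrow> s 8 = 0 \<Longrightarrow> s 9 = 0 \<Longrightarrow>
  s 10 = 0 \<Longrightarrow> s 11 = 0 \<Longrightarrow> s 26 = 0 \<Longrightarrow> q \<le> length x \<Longrightarrow>
  runs QBODY (s(4 := B, 5 := q)) (tQB (length x)) (s(4 := B + dp x q (length x) q, 5 := Suc q))"
proof -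
  assume a: "envW x s" "tz s" "s 6 = 0" "s 7 = 0" "s 8 = 0" "s 9 = 0" "s 10 = 0" "s 11 = 0" "s 26 = 0" "q \<le> length x"
  have s3: "s 3 = Suc (length x)" using a(1) by (simp add: envW_def)
  have b: "\<And>i. dp x q (length x) i < 2 ^ Suc (length x)" using dp_lt a by simp
  have ex0: "pk (Suc (length x)) (dp x q (length x)) (Suc (length x)) div 2 ^ (Suc (length x) * q)
     - pk (Suc (length x)) (dp x q (length x)) (Suc (length x)) div 2 ^ (Suc (length x) * q) div 2 ^ Suc (length x) * 2 ^ Suc (length x)
     = dp x q (length x) q"
    by (rule pk_extract) (use a b in auto)
  have ex: "pk (Suc (length x)) (dp x q (length x)) (Suc (length x)) div 2 ^ (Suc (length x) * q) mod 2 ^ Suc (length x)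
     = dp x q (length x) q" using ex0 unfolding minus_div_mult_eq_mod .
  have ex3: "pk (Suc (length x)) (dp x q (length x)) (Suc (length x)) div 2 ^ (s 3 * q)
     - pk (Suc (length x)) (dp x q (length x)) (Suc (length x)) div 2 ^ (s 3 * q) div 2 ^ s 3 * 2 ^ s 3
     = dp x q (length x) q" unfolding s3 by (rule ex0)
  have ex4: "B + pk (Suc (length x)) (dp x q (length x)) (Suc (length x)) div 2 ^ (s 3 * q)
     - pk (Suc (length x)) (dp x q (length x)) (Suc (length x)) div 2 ^ (s 3 * q) div 2 ^ s 3 * 2 ^ s 3
     = B + dp x q (length x) q"
    using ex3 div_times_less_eq_dividend[of "pk (Suc (length x)) (dp x q (length x)) (Suc (length x)) div 2 ^ (s 3 * q)" "2 ^ s 3"]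
    by linarith
  have p0: "pk (Suc (length x)) (dp x q 0) (Suc (length x)) = 2 ^ (Suc (length x) * q)" using pk_dp0 a by simp
  have m: "q * (Suc (length x) * 5 + 14) \<le> length x * (Suc (length x) * 5 + 14)"
    using a by (intro mult_le_mono1) simp
  show ?thesis
  unfolding QBODY_def
  apply (rule R_mono, rule R_eq)
    apply (rule R_seq, rule R_asgE, simp)+
    apply (rule R_seq, rule R_eq, rule shlk, simp)
    apply (rule R_seq, rule R_asgE, simp)+
    apply (rule R_seq, rule R_eq, rule mloop[where q = q])
  using a s3 apply (simp_all add: envW_def env_def pk_dp0')[10]
     apply (simp | rule refl)
    apply (rule R_seq, rule R_asgE, simp)+
    apply (rule R_seq, rule R_eq, rule shrk, simp)
    apply (rule R_seq, rule R_asgE, simp)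
    apply (rule R_seq, rule R_eq, rule shrw, simp)
    apply (rule R_seq, rule R_eq, rule shlw, simp)
    apply (rule R_seq, rule R_asgE, simp)+
    apply (rule R_asgE, simp)
  using a apply (simp add: fun_eq_iff ex4)
  using a m apply (simp add: s3 tQB_def algebra_simps)
  done
qed


definition QLOOP where "QLOOP = While (Less (V 5) (Plus (V 2) (N 1))) QBODY"

lemma qloop: "envW x s \<Longrightarrow> tz s \<Longrightarrow> s 6 = 0 \<Longrightarrow> s 7 = 0 \<Longrightarrow> s 8 = 0 \<Longrightarrow> s 9 = 0 \<Longrightarrow>
  s 10 = 0 \<Longrightarrow> s 11 = 0 \<Longrightarrow> s 26 = 0 \<Longrightarrow> s 4 = 0 \<Longrightarrow> s 5 = 0 \<Longrightarrow>
  runs QLOOP s (Suc (length x) * (tQB (length x) + 2) + 1)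
    (s(4 := (\<Sum>q<Suc (length x). dp x q (length x) q), 5 := Suc (length x)))"
proof -
  assume a: "envW x s" "tz s" "s 6 = 0" "s 7 = 0" "s 8 = 0" "s 9 = 0" "s 10 = 0" "s 11 = 0" "s 26 = 0"
    "s 4 = 0" "s 5 = 0"
  define f where "f q = s(4 := (\<Sum>q'<q. dp x q' (length x) q'), 5 := q)" for q
  have "runs QLOOP (f 0) (Suc (length x) * (tQB (length x) + 2) + 1) (f (Suc (length x)))"
    unfolding QLOOP_def
  proof (rule R_while)
    fix j assume "j < Suc (length x)"
    then show "bval (Less (V 5) (Plus (V 2) (N 1))) (f j)" using a(1) by (simp add: f_def envW_def env_def)
  next
    show "\<not> bval (Less (V 5) (Plus (V 2) (N 1))) (f (Suc (length x)))" using a(1) by (simp add: f_def envW_def env_def)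
  next
    fix j assume j: "j < Suc (length x)"
    have "runs QBODY (s(4 := (\<Sum>q'<j. dp x q' (length x) q'), 5 := j)) (tQB (length x))
       (s(4 := (\<Sum>q'<j. dp x q' (length x) q') + dp x j (length x) j, 5 := Suc j))"
      by (rule qbody) (use a j in auto)
    then show "runs QBODY (f j) (tQB (length x)) (f (Suc j))" by (simp add: f_def)
  qed
  moreover have "f 0 = s" using a by (simp add: f_def fun_eq_iff)
  ultimately show ?thesis by (simp add: f_def)
qed

definition NLOOP where "NLOOP = While (Less (N 1) (V 19)) (19 ::= Half (V 19) ;; 2 ::= Plus (V 2) (N 1))"

lemma nloop: "s 19 = encode x \<Longrightarrow> s 2 = 0 \<Longrightarrow> runs NLOOP s (length x * (3 + 2) + 1) (s(19 := 1, 2 := length x))"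
proof -
  assume a: "s 19 = encode x" "s 2 = 0"
  define f where "f j = s(19 := encode x div 2 ^ j, 2 := j)" for j
  have "runs NLOOP (f 0) (length x * (3 + 2) + 1) (f (length x))"
    unfolding NLOOP_def
  proof (rule R_while)
    fix j assume j: "j < length x"
    then have "encode x div 2 ^ j = encode (take (length x - j) x)" by (simp add: encode_div)
    moreover have "take (length x - j) x \<noteq> []" using j by (cases x) auto
    then have "1 < encode (take (length x - j) x)" using encode_gt1 by blast
    ultimately show "bval (Less (N 1) (V 19)) (f j)" by (simp add: f_def)
  next
    have "encode x div 2 ^ length x = 1" by (simp add: encode_div encode_Nil)
    then show "\<not> bval (Less (N 1) (V 19)) (f (length x))" by (simp add: f_def)
  next
    fix j
    show "runs (19 ::= Half (V 19) ;; 2 ::= Plus (V 2) (N 1)) (f j) 3 (f (Suc j))"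
      apply (rule R_mono, rule R_eq, rule R_seq, rule R_asg, rule R_asg)
       apply (simp add: f_def fun_eq_iff power_Suc2 div_mult2_eq)
       apply (metis div_mult2_eq mult.commute)
      apply simp
      done
  qed
  moreover have "f 0 = s" using a by (simp add: f_def fun_eq_iff)
  moreover have "f (length x) = s(19 := 1, 2 := length x)" by (simp add: f_def encode_div encode_Nil)
  ultimately show ?thesis by simp
qed

definition MAIN where
  "MAIN = (19 ::= V 0 ;; 2 ::= N 0 ;; NLOOP ;; 19 ::= N 0 ;; 3 ::= Plus (V 2) (N 1) ;; 4 ::= N 0 ;; 5 ::= N 0 ;;
     QLOOP ;; 24 ::= N 1 ;; SHLW ;; 24 ::= Half (V 24) ;; 1 ::= Minus (V 24) (V 4))"

definition tMAIN :: "nat \<Rightarrow> nat" where "tMAIN n = Suc n * (tQB n + 2) + 10 * n + 60"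

lemma main_run: "\<exists>S. runs MAIN (init_state x) (tMAIN (length x)) S \<and>
   S 1 = 2 ^ length x - (\<Sum>q<Suc (length x). dp x q (length x) q)"
  unfolding MAIN_def
  apply (rule exI, rule conjI)
   apply (rule R_mono)
    apply (rule R_seq, rule R_asgE, simp)+
    apply (rule R_seq, rule R_eq, rule nloop, simp add: init_state_def, simp, simp)
    apply (rule R_seq, rule R_asgE, simp)+
    apply (rule R_seq, rule R_eq, rule qloop)
               apply (simp_all add: init_state_def envW_def env_def)[11]
    apply (simp | rule refl)
    apply (rule R_seq, rule R_asgE, simp)
    apply (rule R_seq, rule R_eq, rule shlw, simp)
    apply (rule R_seq, rule R_asgE, simp)
    apply (rule R_asgE, simp)
   apply (simp add: tMAIN_def)
  apply simp
  done


lemma lb: "(a::nat) \<le> A * Q ^ k \<Longrightarrow> n \<le> Q \<Longrightarrow> 1 \<le> Q \<Longrightarrow> n * (a + c) \<le> (A + c) * Q ^ Suc k"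
proof -
  assume a: "a \<le> A * Q ^ k" "n \<le> Q" "1 \<le> Q"
  have "n * (a + c) \<le> Q * (A * Q ^ k + c)" using a by (intro mult_le_mono) auto
  also have "\<dots> = A * Q ^ Suc k + c * Q" by (simp add: algebra_simps)
  also have "c * Q \<le> c * Q ^ Suc k"
  proof -
    have "Q ^ 1 \<le> Q ^ Suc k" using a(3) by (intro power_increasing) auto
    then show ?thesis by simp
  qed
  finally show ?thesis by (simp add: algebra_simps)
qed

lemma la: "(a::nat) \<le> A * Q ^ k \<Longrightarrow> b \<le> B * Q ^ j \<Longrightarrow> j \<le> k \<Longrightarrow> 1 \<le> Q \<Longrightarrow> a + b \<le> (A + B) * Q ^ k"
proof -
  assume a: "a \<le> A * Q ^ k" "b \<le> B * Q ^ j" "j \<le> k" "1 \<le> Q"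
  have "Q ^ j \<le> Q ^ k" using a by (intro power_increasing) auto
  then have "B * Q ^ j \<le> B * Q ^ k" by (rule mult_le_mono2)
  moreover have "(A + B) * Q ^ k = A * Q ^ k + B * Q ^ k" by (simp add: algebra_simps)
  ultimately show ?thesis using a by linarith
qed

lemma lc: "(c::nat) \<le> c * Q ^ 0" by simp

lemma lm: "(a::nat) \<le> A * Q ^ k \<Longrightarrow> m * a \<le> (m * A) * Q ^ k" by simp

lemma time_bound_K: "K = Suc n \<Longrightarrow> tMAIN n \<le> 1300 * K ^ 1300"
proof -
  assume KN: "K = Suc n"
  let ?N = "K"
  have N: "1 \<le> ?N" "n \<le> ?N" "Suc n \<le> ?N" using KN by auto
  have bB: "tBIT n \<le> 25 * ?N ^ 1" using KN by (simp add: tBIT_def)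
  have bE: "tEQX n \<le> 112 * ?N ^ 2"
  proof -
    have "2 * tBIT n \<le> (2 * 25) * ?N ^ 1" by (rule lm[OF bB])
    then have "n * (2 * tBIT n + 42) \<le> (2 * 25 + 42) * ?N ^ Suc 1" by (rule lb[OF _ N(2,1)])
    then have "n * (2 * tBIT n + 42) + 20 \<le> (2 * 25 + 42 + 20) * ?N ^ Suc 1" by (rule la[OF _ lc]) (use N in auto)
    then show ?thesis unfolding tEQX_def by (simp add: power2_eq_square)
  qed
  have bD: "tDL n \<le> 209 * ?N ^ 3"
  proof -
    have "tEQX n + tBIT n \<le> (112 + 25) * ?N ^ 2" by (rule la[OF bE bB]) (use N in auto)
    then have "n * (tEQX n + tBIT n + 32) \<le> (112 + 25 + 32) * ?N ^ Suc 2" by (rule lb[OF _ N(2,1)])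
    then have "n * (tEQX n + tBIT n + 32) + 40 \<le> (112 + 25 + 32 + 40) * ?N ^ Suc 2" by (rule la[OF _ lc]) (use N in auto)
    then show ?thesis unfolding tDL_def by simp
  qed
  have bS: "tSTEP n \<le> 482 * ?N ^ 3"
  proof -
    have 1: "2 * tDL n \<le> (2 * 209) * ?N ^ 3" by (rule lm[OF bD])
    have "5 * n \<le> 5 * ?N ^ 1" using KN by simp
    then have 2: "n * (5 * n + 19) \<le> (5 + 19) * ?N ^ Suc 1" by (rule lb[OF _ N(2,1)])
    have "2 * tDL n + n * (5 * n + 19) \<le> (2 * 209 + (5 + 19)) * ?N ^ 3" by (rule la[OF 1 2]) (use N in auto)
    then have "2 * tDL n + n * (5 * n + 19) + 40 \<le> (2 * 209 + (5 + 19) + 40) * ?N ^ 3" by (rule la[OF _ lc]) (use N in auto)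
    then show ?thesis unfolding tSTEP_def by simp
  qed
  have bP: "tPB n \<le> 1034 * ?N ^ 3"
  proof -
    have 1: "2 * tSTEP n \<le> (2 * 482) * ?N ^ 3" by (rule lm[OF bS])
    have 2: "10 * n \<le> 10 * ?N ^ 1" using KN by simp
    have "2 * tSTEP n + 10 * n \<le> (2 * 482 + 10) * ?N ^ 3" by (rule la[OF 1 2]) (use N in auto)
    then have "2 * tSTEP n + 10 * n + 60 \<le> (2 * 482 + 10 + 60) * ?N ^ 3" by (rule la[OF _ lc]) (use N in auto)
    then show ?thesis unfolding tPB_def by simp
  qed
  have bM: "tMB n \<le> 1056 * ?N ^ 4"
  proof -
    have "Suc n * (tPB n + 2) \<le> (1034 + 2) * ?N ^ Suc 3" by (rule lb[OF bP N(3,1)])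
    then have "Suc n * (tPB n + 2) + 20 \<le> (1034 + 2 + 20) * ?N ^ Suc 3" by (rule la[OF _ lc]) (use N in auto)
    then show ?thesis unfolding tMB_def by simp
  qed
  have bQ: "tQB n \<le> 1216 * ?N ^ 5"
  proof -
    have 1: "n * (tMB n + 2) \<le> (1056 + 2) * ?N ^ Suc 4" by (rule lb[OF bM N(2,1)])
    have "5 * n \<le> 5 * ?N ^ 1" using KN by simp
    then have "n * (5 * n + 19) \<le> (5 + 19) * ?N ^ Suc 1" by (rule lb[OF _ N(2,1)])
    then have 2: "2 * (n * (5 * n + 19)) \<le> (2 * (5 + 19)) * ?N ^ Suc 1" by (rule lm)
    have 3: "10 * n \<le> 10 * ?N ^ 1" using KN by simp
    have "n * (tMB n + 2) + 2 * (n * (5 * n + 19)) \<le> (1056 + 2 + 2 * (5 + 19)) * ?N ^ Suc 4" by (rule la[OF 1 2]) (use N in auto)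
    then have "n * (tMB n + 2) + 2 * (n * (5 * n + 19)) + 10 * n \<le> (1056 + 2 + 2 * (5 + 19) + 10) * ?N ^ Suc 4" by (rule la[OF _ 3]) (use N in auto)
    then have "n * (tMB n + 2) + 2 * (n * (5 * n + 19)) + 10 * n + 100 \<le> (1056 + 2 + 2 * (5 + 19) + 10 + 100) * ?N ^ Suc 4" by (rule la[OF _ lc]) (use N in auto)
    then show ?thesis unfolding tQB_def by simp
  qed
  have bT: "tMAIN n \<le> 1288 * ?N ^ 6"
  proof -
    have 1: "Suc n * (tQB n + 2) \<le> (1216 + 2) * ?N ^ Suc 5" by (rule lb[OF bQ N(3,1)])
    have 2: "10 * n \<le> 10 * ?N ^ 1" using KN by simp
    have "Suc n * (tQB n + 2) + 10 * n \<le> (1216 + 2 + 10) * ?N ^ Suc 5" by (rule la[OF 1 2]) (use N in auto)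
    then have "Suc n * (tQB n + 2) + 10 * n + 60 \<le> (1216 + 2 + 10 + 60) * ?N ^ Suc 5" by (rule la[OF _ lc]) (use N in auto)
    then show ?thesis unfolding tMAIN_def by simp
  qed
  have "?N ^ 6 \<le> ?N ^ 1300" by (rule power_increasing) (use N in auto)
  then have "1288 * ?N ^ 6 \<le> 1300 * ?N ^ 1300" by (intro mult_le_mono) auto
  then show ?thesis using bT by (rule order_trans[rotated])
qed

lemma time_bound: "tMAIN n \<le> 1300 * (n + 1) ^ 1300"
  by (rule time_bound_K) simp

theorem lemma7:
  shows "\<exists>(P::com) (c::nat). \<forall>x :: bool list. \<exists>t s'.
           exec P (init_state x) t s' \<and> s' 1 = card (G_set x) \<and>
           t \<le> c * (length x + 1) ^ c"
proof (rule exI[of _ MAIN], rule exI[of _ 1300], intro allI)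
  fix x :: "bool list"
  obtain S where S: "runs MAIN (init_state x) (tMAIN (length x)) S"
    "S 1 = 2 ^ length x - (\<Sum>q<Suc (length x). dp x q (length x) q)"
    using main_run by blast
  obtain t where t: "exec MAIN (init_state x) t S" "t \<le> tMAIN (length x)" using S(1) unfolding runs_def by blast
  have "t \<le> 1300 * (length x + 1) ^ 1300" using t(2) time_bound[of "length x"] by (rule order_trans)
  moreover have "S 1 = card (G_set x)" using S(2) card_G by simp
  ultimately show "\<exists>t s'. exec MAIN (init_state x) t s' \<and> s' 1 = card (G_set x) \<and> t \<le> 1300 * (length x + 1) ^ 1300"
    using t(1) by blast
qed


end
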